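(* For every integer $n \geq 3$, the number $c_4(n)$ of cyclic permutations of length $n$ in the $\sigma$-class with signature $\sigma_4 = -+-$ satisfies \[ c_4(n) = \frac{L_3^*(n;\sigma_4)}{4}. \]
   Context: $\mathcal S_n$ is the set of permutations of $[n]=\{1,\dots,n\}$, written in one-line notation $\pi=\pi_1\cdots\pi_n$. A permutation is cyclic if its cycle decomposition consists of a single $n$-cycle; $\mathcal C_n$ is the set of cyclic permutations in $\mathcal S_n$. For a signature $\sigma=\sigma^0\sigma^1\cdots\sigma^{k-1}\in\{+,-\}^k$, the $\sigma$-class $\mathcal S^\sigma_n$ is the set of $\pi\in\mathcal S_n$ for which there exist integers $0=e_0\le e_1\le\cdots\le e_k=n$ such that for each $i\in\{0,\dots,k-1\}$ the segment $\pi_{e_i+1}\cdots\pi_{e_{i+1}}$ is increasing if $\sigma^i=+$ and decreasing if $\sigma^i=-$. Set $\mathcal C_n^\sigma=\mathcal C_n\cap\mathcal S_n^\sigma$ and $c_4(n)=|\mathcal C_n^{-+-}|$. A word of length $m$ on $k$ letters is a sequence $s=s_1\cdots s_m$ with $s_j\in\{0,1,\dots,k-1\}$; it is primitive if it is not of the form $q^r$ for any $r>1$. A necklace is an equivalence class of words under cyclic rotation; it is primitive if its representatives are primitive. $L_k(m)$ denotes the number of primitive necklaces of length $m$ on $k$ letters. For $\sigma\in\{+,-\}^k$ let $T_\sigma^-=\{i:\sigma^i=-\}$ and $o_\sigma(s)=|\{j: s_j\in T_\sigma^-\}|$. $L_k(m;\sigma)$ denotes the number of primitive necklaces of length $m$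 on $k$ letters whose representatives $s$ have $o_\sigma(s)$ odd, with $L_k(m;\sigma)=0$ if $m$ is not an integer. $L_k^*(n;\sigma)=L_k(n)+L_k(\tfrac n2;\sigma)$. *)

theory Defs
  imports Complex_Main "HOL-Combinatorics.Permutations"
begin

datatype sign = Plus | Minus

text \<open>Permutations of [n] = {1..n}; pi is a function with pi permutes {1..n},
  and the one-line notation is pi 1, ..., pi n.\<close>

definition cyclic_perm :: "nat \<Rightarrow> (nat \<Rightarrow> nat) \<Rightarrow> bool" where
  "cyclic_perm n \<pi> \<longleftrightarrow> \<pi> permutes {1..n} \<and>
     (\<forall>x\<in>{1..n}. \<forall>y\<in>{1..n}. \<exists>j. (\<pi> ^^ j) x = y)"

definition in_sigma_class :: "sign list \<Rightarrow> nat \<Rightarrow> (nat \<Rightarrow> nat) \<Rightarrow> bool" where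
  "in_sigma_class \<sigma> n \<pi> \<longleftrightarrow> \<pi> permutes {1..n} \<and>
     (\<exists>e :: nat \<Rightarrow> nat. e 0 = 0 \<and> e (length \<sigma>) = n \<and>
        (\<forall>i < length \<sigma>. e i \<le> e (Suc i)) \<and>
        (\<forall>i < length \<sigma>. \<forall>j j'. e i < j \<and> j < j' \<and> j' \<le> e (Suc i) \<longrightarrow>
            (if \<sigma> ! i = Plus then \<pi> j < \<pi> j' else \<pi> j > \<pi> j')))"

definition cyc_class :: "sign list \<Rightarrow> nat \<Rightarrow> (nat \<Rightarrow> nat) set" where
  "cyc_class \<sigma> n = {\<pi>. cyclic_perm n \<pi> \<and> in_sigma_class \<sigma> n \<pi>}"

definition c4 :: "nat \<Rightarrow> nat" where
  "c4 n = card (cyc_class [Minus, Plus, Minus] n)"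

definition words :: "nat \<Rightarrow> nat \<Rightarrow> nat list set" where
  "words k m = {s. length s = m \<and> set s \<subseteq> {0..<k}}"

definition primitive_word :: "nat list \<Rightarrow> bool" where
  "primitive_word s \<longleftrightarrow> \<not> (\<exists>q r. r > 1 \<and> s = concat (replicate r q))"

definition necklace :: "nat list \<Rightarrow> nat list set" where
  "necklace s = {rotate j s | j. True}"

definition L :: "nat \<Rightarrow> nat \<Rightarrow> nat" where
  "L k m = card (necklace ` {s \<in> words k m. primitive_word s})"

definition o_sig :: "sign list \<Rightarrow> nat list \<Rightarrow> nat" where
  "o_sig \<sigma> s = length (filter (\<lambda>c. c < length \<sigma> \<and> \<sigma> ! c = Minus) s)"

text \<open>L_k(m; sigma) with real argument m; it is 0 unless m is a natural number.
  (Rotation preserves o_sig, so the parity condition is a property of the necklace.)\<close>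
definition L_sig :: "nat \<Rightarrow> real \<Rightarrow> sign list \<Rightarrow> nat" where
  "L_sig k m \<sigma> = (if m \<in> \<nat> then
      card (necklace ` {s \<in> words k (nat \<lfloor>m\<rfloor>). primitive_word s \<and> odd (o_sig \<sigma> s)})
    else 0)"

definition L_star :: "nat \<Rightarrow> nat \<Rightarrow> sign list \<Rightarrow> nat" where
  "L_star k n \<sigma> = L k n + L_sig k (real n / 2) \<sigma>"

end

theory Submission
  imports Defs
begin


lemma nth_concat_replicate:
  "l < r * length q \<Longrightarrow> concat (replicate r q) ! l = q ! (l mod length q)"
proof (induction r arbitrary: l)
  case 0 then show ?case by simp
next
  case (Suc r)
  show ?case
  proof (cases "l < length q")
    case True then show ?thesis by (simp add: nth_append)
  next
    case False
    then have "l - length q < r * length q" using Suc.prems by simp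
    then show ?thesis using False Suc.IH[of "l - length q"]
      by (simp add: nth_append mod_if)
  qed
qed

lemma rotate_self_not_primitive:
  assumes "rotate k s = s" "0 < k" "k < length s"
  shows "\<not> primitive_word s"
proof -
  define n where "n = length s"
  have n0: "n > 0" using assms(2,3) n_def by linarith
  have per1: "s ! ((l + k) mod n) = s ! l" if "l < n" for l
    using assms(1) nth_rotate[of l s k] that n_def by (simp add: add.commute)
  have perm: "s ! ((l + a * k) mod n) = s ! l" if "l < n" for l a
  proof (induction a)
    case 0 then show ?case using that by simp
  next
    case (Suc a)
    have "s ! ((l + Suc a * k) mod n) = s ! (((l + a * k) mod n + k) mod n)"
      by (metis mod_add_right_eq add.commute add.left_commute mult_Suc)
    also have "\<dots> = s ! ((l + a * k) mod n)" using per1 n0 by simp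
    finally show ?case using Suc by simp
  qed
  define g where "g = gcd k n"
  obtain x y where xy: "k * x = n * y + g" using bezout_nat[of k n] assms(2) g_def by auto
  have gk: "g \<le> k" using g_def assms(2) by (simp add: gcd_le1_nat)
  have gpos: "g > 0" using g_def assms(2) by simp
  have gn: "g < n" using gk assms(3) n_def by simp
  have gdvd: "g dvd n" using g_def by simp
  have "(x * k) mod n = g" using xy gn by (simp add: mult.commute)
  then have perg: "s ! ((l + g) mod n) = s ! l" if "l < n" for l
    using perm[OF that, of x] by (metis mod_add_right_eq)
  have modg: "s ! l = s ! (l mod g)" if "l < n" for l
    using that
  proof (induction l rule: less_induct)
    case (less l)
    show ?case
    proof (cases "l < g")
      case True then show ?thesis by simp
    next
      case False
      have "s ! (l - g) = s ! ((l - g + g) mod n)" using perg[of "l - g"] less.prems by simp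
      also have "\<dots> = s ! l" using False less.prems by simp
      finally have "s ! l = s ! (l - g)" by simp
      also have "\<dots> = s ! ((l - g) mod g)" using less.IH[of "l - g"] less.prems gpos False by simp
      also have "\<dots> = s ! (l mod g)" using False by (simp add: le_mod_geq)
      finally show ?thesis .
    qed
  qed
  define r where "r = n div g"
  have rn: "r * g = n" using gdvd r_def by simp
  have r1: "r > 1" using rn gn gpos
    by (metis less_one mult.left_neutral mult_is_0 nat_neq_iff not_less_zero)
  have "s = concat (replicate r (take g s))"
  proof (rule nth_equalityI)
    show "length s = length (concat (replicate r (take g s)))"
      using rn gn n_def by (simp add: length_concat sum_list_replicate)
    fix l assume "l < length s"
    then show "s ! l = concat (replicate r (take g s)) ! l"
      using nth_concat_replicate[of l r "take g s"] modg[of l] rn gn n_def gpos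
      by (simp add: min_def)
  qed
  then show ?thesis using r1 unfolding primitive_word_def by blast
qed

lemma primitive_iff_rot:
  assumes "s \<noteq> []"
  shows "primitive_word s \<longleftrightarrow> (\<forall>k. 0 < k \<and> k < length s \<longrightarrow> rotate k s \<noteq> s)"
proof
  assume "primitive_word s"
  then show "\<forall>k. 0 < k \<and> k < length s \<longrightarrow> rotate k s \<noteq> s"
    using rotate_self_not_primitive by blast
next
  assume R: "\<forall>k. 0 < k \<and> k < length s \<longrightarrow> rotate k s \<noteq> s"
  show "primitive_word s"
  proof (rule ccontr)
    assume "\<not> primitive_word s"
    then obtain q r where qr: "r > 1" "s = concat (replicate r q)" unfolding primitive_word_def by blast
    then obtain r' where r': "r = Suc r'" "r' > 0" by (cases r) auto
    have q0: "q \<noteq> []" using qr assms by auto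
    have ls: "length s = r * length q" using qr by (simp add: length_concat sum_list_replicate)
    have "s = q @ concat (replicate r' q)" using qr r' by simp
    moreover have "s = concat (replicate r' q) @ q" using qr r'
      by (simp add: replicate_append_same[symmetric])
    ultimately have "rotate (length q) s = s" by (metis rotate_append)
    moreover have "0 < length q" "length q < length s" using q0 ls qr(1) by auto
    ultimately show False using R by blast
  qed
qed


lemma rotate_inj_prim:
  assumes "primitive_word q" "a < length q" "b < length q" "rotate a q = rotate b q"
  shows "a = b"
proof (rule ccontr)
  assume ab: "a \<noteq> b"
  have q0: "q \<noteq> []" using assms(2) by auto
  have key: "rotate (d - c) q = q" if "c < d" "d < length q" "rotate c q = rotate d q" for c d
  proof -
    have "rotate (length q - c) (rotate c q) = q"
      using that(1,2) by (simp add: rotate_rotate)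
    moreover have "rotate (length q - c) (rotate d q) = rotate (length q + (d - c)) q"
    proof -
      have "length q - c + d = length q + (d - c)" using that by simp
      then show ?thesis by (simp only: rotate_rotate)
    qed
    moreover have "rotate (length q + (d - c)) q = rotate (d - c) q"
      by (metis rotate_conv_mod mod_add_self1)
    ultimately show ?thesis using that(3) by metis
  qed
  show False
  proof (cases "a < b")
    case True
    then show False using key[of a b] assms primitive_iff_rot[OF q0] by auto
  next
    case False
    then have "b < a" using ab by simp
    then show False using key[of b a] assms primitive_iff_rot[OF q0] by auto
  qed
qed

lemma rotate_mod_len: "rotate j s = rotate (j mod length s) s"
  by (rule rotate_conv_mod)

lemma necklace_alt: "s \<noteq> [] \<Longrightarrow> necklace s = (\<lambda>j. rotate j s) ` {0..<length s}"
  unfolding necklace_def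
  by (auto intro!: image_eqI[where x = "_ mod length s"] simp: rotate_conv_mod[symmetric])

lemma card_necklace:
  assumes "primitive_word s" "s \<noteq> []"
  shows "card (necklace s) = length s"
proof -
  have "inj_on (\<lambda>j. rotate j s) {0..<length s}"
    using rotate_inj_prim[OF assms(1)] by (auto simp: inj_on_def)
  then show ?thesis using necklace_alt[OF assms(2)] by (simp add: card_image)
qed

lemma necklace_trans:
  assumes "t \<in> necklace s"
  shows "necklace t = necklace s"
proof -
  obtain j where t: "t = rotate j s" using assms unfolding necklace_def by auto
  show ?thesis
  proof (cases "s = []")
    case True then show ?thesis using t by simp
  next
    case False
    have "necklace t \<subseteq> necklace s" unfolding necklace_def t by (auto simp: rotate_rotate)
    moreover have "s = rotate (length s - j mod length s) t"
      using False t by (simp add: rotate_rotate rotate_conv_mod[of "j" s])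
    then have "necklace s \<subseteq> necklace t" unfolding necklace_def
      by (auto simp: rotate_rotate) (metis rotate_rotate)
    ultimately show ?thesis by blast
  qed
qed

lemma card_necklaces:
  assumes fin: "finite S" and len: "\<And>s. s \<in> S \<Longrightarrow> length s = k" and k0: "k > 0"
    and rot: "\<And>s j. s \<in> S \<Longrightarrow> rotate j s \<in> S"
    and prim: "\<And>s. s \<in> S \<Longrightarrow> primitive_word s"
  shows "card S = k * card (necklace ` S)"
proof -
  have U: "\<Union> (necklace ` S) = S"
  proof
    show "\<Union> (necklace ` S) \<subseteq> S" unfolding necklace_def using rot by auto
    show "S \<subseteq> \<Union> (necklace ` S)" unfolding necklace_def by (force intro: exI[of _ 0])
  qed
  have "k * card (necklace ` S) = card (\<Union> (necklace ` S))"
  proof (rule card_partition)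
    show "finite (necklace ` S)" using fin by simp
    show "finite (\<Union> (necklace ` S))" using U fin by simp
    show "\<And>c. c \<in> necklace ` S \<Longrightarrow> card c = k"
      using card_necklace prim len k0 by fastforce
    show "\<And>c1 c2. c1 \<in> necklace ` S \<Longrightarrow> c2 \<in> necklace ` S \<Longrightarrow> c1 \<noteq> c2 \<Longrightarrow> c1 \<inter> c2 = {}"
      using necklace_trans by blast
  qed
  then show ?thesis using U by simp
qed


lemma funpow_in_set: "\<pi> permutes S \<Longrightarrow> x \<in> S \<Longrightarrow> (\<pi> ^^ k) x \<in> S"
  by (induction k) (auto simp: permutes_in_image)

lemma funpow_mod_period:
  assumes "(f ^^ r) x = x"
  shows "(f ^^ k) x = (f ^^ (k mod r)) x"
proof -
  have "(f ^^ (a * r + b)) x = (f ^^ b) x" for a b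
  proof (induction a)
    case 0 then show ?case by simp
  next
    case (Suc a)
    have e: "Suc a * r + b = (a * r + b) + r" by simp
    have "(f ^^ (Suc a * r + b)) x = (f ^^ (a * r + b)) ((f ^^ r) x)"
      by (simp only: e funpow_add comp_def)
    then show ?case using Suc assms by simp
  qed
  from this[of "k div r" "k mod r"] show ?thesis by simp
qed

lemma cyc_facts:
  assumes cyc: "cyclic_perm n \<pi>" and x: "x \<in> {1..n}"
  shows "(\<pi> ^^ n) x = x" "bij_betw (\<lambda>k. (\<pi> ^^ k) x) {0..<n} {1..n}"
proof -
  have perm: "\<pi> permutes {1..n}" and reach: "\<forall>y\<in>{1..n}. \<exists>j. (\<pi> ^^ j) x = y"
    using cyc x unfolding cyclic_perm_def by auto
  define f where "f k = (\<pi> ^^ k) x" for k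
  have fin: "f k \<in> {1..n}" for k using funpow_in_set[OF perm x] f_def by simp
  have injpow: "inj (\<pi> ^^ i)" for i using perm by (simp add: permutes_inj inj_fn)
  have "\<not> inj_on f {0..n}"
  proof
    assume "inj_on f {0..n}"
    then have "card (f ` {0..n}) = n + 1" by (simp add: card_image)
    moreover have "f ` {0..n} \<subseteq> {1..n}" using fin by auto
    then have "card (f ` {0..n}) \<le> n" using card_mono[of "{1..n}"] by fastforce
    ultimately show False by simp
  qed
  then obtain i j where ij: "i < j" "j \<le> n" "f i = f j"
    unfolding inj_on_def by (metis atLeastAtMost_iff linorder_neqE_nat)
  have "f (j - i) = x"
  proof -
    have "(\<pi> ^^ i) (f (j - i)) = (\<pi> ^^ i) x"
      using ij unfolding f_def by (simp add: funpow_add[symmetric, THEN fun_cong, simplified])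
    then show ?thesis using injpow[of i] by (simp add: inj_eq)
  qed
  define \<rho> where "\<rho> = (LEAST k. 0 < k \<and> f k = x)"
  have r1: "0 < \<rho> \<and> f \<rho> = x" unfolding \<rho>_def
    by (rule LeastI[of _ "j - i"]) (use ij \<open>f (j - i) = x\<close> in auto)
  have r2: "\<rho> \<le> j - i" unfolding \<rho>_def
    by (rule Least_le) (use ij \<open>f (j - i) = x\<close> in auto)
  have fmod: "f k = f (k mod \<rho>)" for k using funpow_mod_period[of \<rho> \<pi> x k] r1 f_def by simp
  have "{1..n} \<subseteq> f ` {0..<\<rho>}"
  proof
    fix y assume "y \<in> {1..n}"
    then obtain k where "f k = y" using reach \<open>y \<in> {1..n}\<close> unfolding f_def by blast
    then have "y = f (k mod \<rho>)" using fmod[of k] by simp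
    moreover have "k mod \<rho> \<in> {0..<\<rho>}" using r1 by simp
    ultimately show "y \<in> f ` {0..<\<rho>}" by blast
  qed
  then have "card {1..n} \<le> card (f ` {0..<\<rho>})" by (intro card_mono) auto
  then have "n \<le> card (f ` {0..<\<rho>})" by simp
  also have "\<dots> \<le> \<rho>" using card_image_le[of "{0..<\<rho>}" f] by simp
  finally have rn: "\<rho> = n" using r2 ij by simp
  show "(\<pi> ^^ n) x = x" using r1 rn f_def by simp
  have "inj_on f {0..<n}"
  proof (rule inj_onI)
    fix a b assume ab: "a \<in> {0..<n}" "b \<in> {0..<n}" "f a = f b"
    show "a = b"
    proof (rule ccontr)
      assume "a \<noteq> b"
      then consider "a < b" | "b < a" by linarith
      then show False
      proof cases
        case 1
        have "(\<pi> ^^ a) (f (b - a)) = (\<pi> ^^ a) x"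
          using ab 1 unfolding f_def by (simp add: funpow_add[symmetric, THEN fun_cong, simplified])
        then have "f (b - a) = x" using injpow[of a] by (simp add: inj_eq)
        moreover have "\<rho> \<le> b - a" unfolding \<rho>_def by (rule Least_le) (use 1 \<open>f (b - a) = x\<close> in auto)
        ultimately show False using rn ab 1 by simp
      next
        case 2
        have "(\<pi> ^^ b) (f (a - b)) = (\<pi> ^^ b) x"
          using ab 2 unfolding f_def by (simp add: funpow_add[symmetric, THEN fun_cong, simplified])
        then have "f (a - b) = x" using injpow[of b] by (simp add: inj_eq)
        moreover have "\<rho> \<le> a - b" unfolding \<rho>_def by (rule Least_le) (use 2 \<open>f (a - b) = x\<close> in auto)
        ultimately show False using rn ab 2 by simp
      qed
    qed
  qed
  moreover have "f ` {0..<n} = {1..n}"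
  proof (rule card_subset_eq)
    show "finite {1..n}" by simp
    show "f ` {0..<n} \<subseteq> {1..n}" using fin by auto
    show "card (f ` {0..<n}) = card {1..n}" using \<open>inj_on f {0..<n}\<close> by (simp add: card_image)
  qed
  ultimately show "bij_betw (\<lambda>k. (\<pi> ^^ k) x) {0..<n} {1..n}"
    unfolding bij_betw_def f_def[abs_def] by simp
qed


definition valid :: "nat \<Rightarrow> (nat \<Rightarrow> nat) \<Rightarrow> nat \<Rightarrow> nat \<Rightarrow> bool" where
  "valid n \<pi> e1 e2 \<longleftrightarrow> e1 \<le> e2 \<and> e2 \<le> n \<and>
     (\<forall>j j'. 0 < j \<and> j < j' \<and> j' \<le> e1 \<longrightarrow> \<pi> j' < \<pi> j) \<and>
     (\<forall>j j'. e1 < j \<and> j < j' \<and> j' \<le> e2 \<longrightarrow> \<pi> j < \<pi> j') \<and>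
     (\<forall>j j'. e2 < j \<and> j < j' \<and> j' \<le> n \<longrightarrow> \<pi> j' < \<pi> j)"

lemma sigma_valid:
  "in_sigma_class [Minus, Plus, Minus] n \<pi> \<longleftrightarrow> \<pi> permutes {1..n} \<and> (\<exists>e1 e2. valid n \<pi> e1 e2)"
proof
  assume A: "in_sigma_class [Minus, Plus, Minus] n \<pi>"
  then obtain e where e: "e 0 = 0" "e (length [Minus, Plus, Minus]) = n" "\<forall>i<length [Minus, Plus, Minus]. e i \<le> e (Suc i)"
    "\<forall>i<length [Minus, Plus, Minus]. \<forall>j j'. e i < j \<and> j < j' \<and> j' \<le> e (Suc i) \<longrightarrow>
            (if [Minus, Plus, Minus] ! i = Plus then \<pi> j < \<pi> j' else \<pi> j > \<pi> j')"
    unfolding in_sigma_class_def by blast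
  have "valid n \<pi> (e 1) (e 2)"
    unfolding valid_def
  proof (intro conjI allI impI)
    show "e 1 \<le> e 2" using e(3)[rule_format, of 1] by (simp add: numeral_eq_Suc)
    show "e 2 \<le> n" using e(2) e(3)[rule_format, of 2] by (simp add: numeral_eq_Suc)
    fix j j'
    show "0 < j \<and> j < j' \<and> j' \<le> e 1 \<Longrightarrow> \<pi> j' < \<pi> j"
      using e(1) e(4)[rule_format, of 0 j j'] by simp
    show "e 1 < j \<and> j < j' \<and> j' \<le> e 2 \<Longrightarrow> \<pi> j < \<pi> j'"
      using e(4)[rule_format, of 1 j j'] by (simp add: numeral_eq_Suc)
    show "e 2 < j \<and> j < j' \<and> j' \<le> n \<Longrightarrow> \<pi> j' < \<pi> j"
      using e(2) e(4)[rule_format, of 2 j j'] by (simp add: numeral_eq_Suc)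
  qed
  then show "\<pi> permutes {1..n} \<and> (\<exists>e1 e2. valid n \<pi> e1 e2)"
    using A unfolding in_sigma_class_def by blast
next
  assume "\<pi> permutes {1..n} \<and> (\<exists>e1 e2. valid n \<pi> e1 e2)"
  then obtain e1 e2 where P: "\<pi> permutes {1..n}" and V: "valid n \<pi> e1 e2" by blast
  define e where "e i = (if i = 0 then 0 else if i = 1 then e1 else if i = 2 then e2 else n)" for i :: nat
  have "e 0 = 0 \<and> e (length [Minus, Plus, Minus]) = n \<and>
        (\<forall>i < length [Minus, Plus, Minus]. e i \<le> e (Suc i)) \<and>
        (\<forall>i < length [Minus, Plus, Minus]. \<forall>j j'. e i < j \<and> j < j' \<and> j' \<le> e (Suc i) \<longrightarrow>
            (if [Minus, Plus, Minus] ! i = Plus then \<pi> j < \<pi> j' else \<pi> j > \<pi> j'))"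
  proof (intro conjI allI impI)
    show "e 0 = 0" "e (length [Minus, Plus, Minus]) = n" by (simp_all add: e_def)
    fix i assume "i < length [Minus, Plus, Minus]"
    then have "i = 0 \<or> i = 1 \<or> i = 2" by auto
    then show "e i \<le> e (Suc i)" using V unfolding valid_def e_def by auto
    fix j j' assume "e i < j \<and> j < j' \<and> j' \<le> e (Suc i)"
    then show "if [Minus, Plus, Minus] ! i = Plus then \<pi> j < \<pi> j' else \<pi> j > \<pi> j'"
      using \<open>i = 0 \<or> i = 1 \<or> i = 2\<close> V unfolding valid_def e_def by auto
  qed
  then show "in_sigma_class [Minus, Plus, Minus] n \<pi>" unfolding in_sigma_class_def using P by blast
qed

lemma chain_up:
  assumes "\<forall>i. a \<le> i \<and> i + 1 \<le> b \<longrightarrow> (f::nat\<Rightarrow>nat) i < f (i + 1)" "a \<le> j" "j < j'" "j' \<le> b"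
  shows "f j < f j'"
  using assms(3,4)
proof (induction j' rule: less_induct)
  case (less k)
  then obtain k' where k: "k = Suc k'" by (cases k) auto
  have s: "f k' < f k" using assms(1) assms(2) less.prems k by auto
  show ?case
  proof (cases "j = k'")
    case True then show ?thesis using s by simp
  next
    case False
    then have "f j < f k'" using less.IH[of k'] less.prems k by simp
    then show ?thesis using s by simp
  qed
qed

lemma chain_down:
  assumes "\<forall>i. a \<le> i \<and> i + 1 \<le> b \<longrightarrow> (f::nat\<Rightarrow>nat) (i + 1) < f i" "a \<le> j" "j < j'" "j' \<le> b"
  shows "f j' < f j"
  using assms(3,4)
proof (induction j' rule: less_induct)
  case (less k)
  then obtain k' where k: "k = Suc k'" by (cases k) auto
  have s: "f k < f k'" using assms(1) assms(2) less.prems k by auto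
  show ?case
  proof (cases "j = k'")
    case True then show ?thesis using s by simp
  next
    case False
    then have "f k' < f j" using less.IH[of k'] less.prems k by simp
    then show ?thesis using s by simp
  qed
qed

lemma valid_local:
  "valid n \<pi> e1 e2 \<longleftrightarrow> (e1 \<le> e2 \<and> e2 \<le> n \<and>
     (\<forall>i. 0 < i \<and> i + 1 \<le> e1 \<longrightarrow> \<pi> (i + 1) < \<pi> i) \<and>
     (\<forall>i. e1 < i \<and> i + 1 \<le> e2 \<longrightarrow> \<pi> i < \<pi> (i + 1)) \<and>
     (\<forall>i. e2 < i \<and> i + 1 \<le> n \<longrightarrow> \<pi> (i + 1) < \<pi> i))"
  (is "?L \<longleftrightarrow> ?R")
proof
  assume ?L then show ?R unfolding valid_def by auto
next
  assume R: ?R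
  show ?L unfolding valid_def
  proof (intro conjI allI impI)
    show "e1 \<le> e2" "e2 \<le> n" using R by auto
    fix j j'
    show "0 < j \<and> j < j' \<and> j' \<le> e1 \<Longrightarrow> \<pi> j' < \<pi> j"
      using chain_down[of 1 e1 \<pi> j j'] R by auto
    show "e1 < j \<and> j < j' \<and> j' \<le> e2 \<Longrightarrow> \<pi> j < \<pi> j'"
      using chain_up[of "e1+1" e2 \<pi> j j'] R by auto
    show "e2 < j \<and> j < j' \<and> j' \<le> n \<Longrightarrow> \<pi> j' < \<pi> j"
      using chain_down[of "e2+1" n \<pi> j j'] R by auto
  qed
qed


lemma perm_dsc:
  fixes \<pi> :: "nat \<Rightarrow> nat"
  assumes "\<pi> permutes {1..n}" "0 < i" "i + 1 \<le> n" "\<not> \<pi> i < \<pi> (i + 1)"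
  shows "\<pi> (i + 1) < \<pi> i"
proof -
  have "\<pi> i \<noteq> \<pi> (i + 1)"
  proof
    assume "\<pi> i = \<pi> (i + 1)"
    then have "i = i + 1" by (rule injD[OF permutes_inj[OF assms(1)]])
    then show False by simp
  qed
  then show ?thesis using assms(4) by simp
qed

lemma not_decreasing:
  assumes perm: "\<pi> permutes {1..n}" and cyc: "cyclic_perm n \<pi>" and n3: "n \<ge> 3"
  shows "\<exists>i. 0 < i \<and> i + 1 \<le> n \<and> \<pi> i < \<pi> (i + 1)"
proof (rule ccontr)
  assume "\<not> ?thesis"
  then have D: "\<pi> (i + 1) < \<pi> i" if "0 < i" "i + 1 \<le> n" for i
    using perm_dsc[OF perm that] that by blast
  have rng: "\<pi> i \<in> {1..n}" if "i \<in> {1..n}" for i using permutes_in_image[OF perm] that by blast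
  have low: "k < n \<longrightarrow> k + 1 \<le> \<pi> (n - k)" for k
  proof (induction k)
    case 0 then show ?case using rng[of n] n3 by auto
  next
    case (Suc k)
    show ?case
    proof
      assume "Suc k < n"
      then have "\<pi> (n - Suc k + 1) < \<pi> (n - Suc k)" using D[of "n - Suc k"] by simp
      moreover have "n - Suc k + 1 = n - k" using \<open>Suc k < n\<close> by simp
      ultimately show "Suc k + 1 \<le> \<pi> (n - Suc k)" using Suc \<open>Suc k < n\<close> by simp
    qed
  qed
  have up: "k < n \<longrightarrow> \<pi> (1 + k) \<le> n - k" for k
  proof (induction k)
    case 0 then show ?case using rng[of 1] n3 by auto
  next
    case (Suc k)
    show ?case
    proof
      assume "Suc k < n"
      then have "\<pi> (1 + k + 1) < \<pi> (1 + k)" using D[of "1 + k"] by simp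
      then show "\<pi> (1 + Suc k) \<le> n - Suc k" using Suc \<open>Suc k < n\<close> by simp
    qed
  qed
  have val: "\<pi> i = n + 1 - i" if "1 \<le> i" "i \<le> n" for i
  proof -
    have "n - i + 1 \<le> \<pi> i" using low[of "n - i"] that by simp
    moreover have "\<pi> i \<le> n - (i - 1)" using up[of "i - 1"] that by simp
    ultimately show ?thesis using that by simp
  qed
  have orb: "(\<pi> ^^ j) 1 \<in> {1, n}" for j
  proof (induction j)
    case 0 then show ?case by simp
  next
    case (Suc j)
    then have "(\<pi> ^^ j) 1 = 1 \<or> (\<pi> ^^ j) 1 = n" by simp
    moreover have "\<pi> 1 = n" using val[of 1] n3 by simp
    moreover have "\<pi> n = 1" using val[of n] n3 by simp
    ultimately show ?case by auto
  qed
  have R: "\<forall>x\<in>{1..n}. \<forall>y\<in>{1..n}. \<exists>j. (\<pi> ^^ j) x = y" using cyc unfolding cyclic_perm_def by blast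
  have "(1::nat) \<in> {1..n}" "(2::nat) \<in> {1..n}" using n3 by auto
  then have "\<exists>j. (\<pi> ^^ j) 1 = 2" using R by simp
  then obtain j where "(\<pi> ^^ j) 1 = 2" by blast
  then have "(2::nat) = 1 \<or> 2 = n" using orb[of j] by simp
  then show False using n3 by linarith
qed

lemma labelings_card:
  assumes perm: "\<pi> permutes {1..n}" and cyc: "cyclic_perm n \<pi>" and n3: "n \<ge> 3"
    and V: "valid n \<pi> a1 a2"
  shows "card {(e1, e2). valid n \<pi> e1 e2} = 4"
proof -
  define AS where "AS = {i. 0 < i \<and> i + 1 \<le> n \<and> \<pi> i < \<pi> (i + 1)}"
  have finAS: "finite AS" unfolding AS_def by (rule finite_subset[of _ "{..n}"]) auto
  have neAS: "AS \<noteq> {}" using not_decreasing[OF perm cyc n3] unfolding AS_def by blast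
  define i0 where "i0 = Min AS"
  define i1 where "i1 = Max AS"
  have i0AS: "i0 \<in> AS" and i1AS: "i1 \<in> AS" using finAS neAS i0_def i1_def by auto
  have i0min: "\<And>i. i \<in> AS \<Longrightarrow> i0 \<le> i" using finAS i0_def by simp
  have i1max: "\<And>i. i \<in> AS \<Longrightarrow> i \<le> i1" using finAS i1_def by simp
  have dsc: "\<pi> (i + 1) < \<pi> i" if "0 < i" "i + 1 \<le> n" "i \<notin> AS" for i
    using perm_dsc[OF perm that(1,2)] that unfolding AS_def by blast
  have notdsc: "\<not> \<pi> (i + 1) < \<pi> i" if "i \<in> AS" for i using that unfolding AS_def by auto
  have VL: "a1 \<le> a2 \<and> a2 \<le> n \<and>
     (\<forall>i. 0 < i \<and> i + 1 \<le> a1 \<longrightarrow> \<pi> (i + 1) < \<pi> i) \<and>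
     (\<forall>i. a1 < i \<and> i + 1 \<le> a2 \<longrightarrow> \<pi> i < \<pi> (i + 1)) \<and>
     (\<forall>i. a2 < i \<and> i + 1 \<le> n \<longrightarrow> \<pi> (i + 1) < \<pi> i)" using V valid_local by blast
  have inA: "a1 \<le> i \<and> i \<le> a2" if "i \<in> AS" for i
  proof -
    have "\<not> (i + 1 \<le> a1)" using VL notdsc[OF that] that unfolding AS_def by auto
    moreover have "\<not> (a2 < i)" using VL notdsc[OF that] that unfolding AS_def by auto
    ultimately show ?thesis by simp
  qed
  have H: "i \<in> AS" if "i0 \<le> i" "i \<le> i1" for i
  proof -
    have a: "a1 \<le> i0" "i1 \<le> a2" using inA[OF i0AS] inA[OF i1AS] by auto
    show ?thesis
    proof (cases "i = a1")
      case True then show ?thesis using a that i0AS by simp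
    next
      case False
      show ?thesis
      proof (cases "i + 1 \<le> a2")
        case True
        then have "\<pi> i < \<pi> (i + 1)" using VL False a that by auto
        moreover have "0 < i" using i0AS that unfolding AS_def by auto
        ultimately show ?thesis unfolding AS_def using True VL by auto
      next
        case False
        then have "i = i1" using a that by simp
        then show ?thesis using i1AS by simp
      qed
    qed
  qed
  have i0pos: "0 < i0" and i1n: "i1 + 1 \<le> n" using i0AS i1AS unfolding AS_def by auto
  have i01: "i0 \<le> i1" using i1max[OF i0AS] .
  have eq: "{(e1, e2). valid n \<pi> e1 e2} = {i0 - 1, i0} \<times> {i1, i1 + 1}"
  proof
    show "{i0 - 1, i0} \<times> {i1, i1 + 1} \<subseteq> {(e1, e2). valid n \<pi> e1 e2}"
    proof clarify
      fix e1 e2 assume e: "e1 \<in> {i0 - 1, i0}" "e2 \<in> {i1, i1 + 1}"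
      show "valid n \<pi> e1 e2" unfolding valid_local
      proof (intro conjI allI impI)
        show "e1 \<le> e2" using e i01 by auto
        show "e2 \<le> n" using e i1n by auto
        fix i
        show "0 < i \<and> i + 1 \<le> e1 \<Longrightarrow> \<pi> (i + 1) < \<pi> i"
        proof -
          assume "0 < i \<and> i + 1 \<le> e1"
          moreover then have "i < i0" using e by auto
          then have "i \<notin> AS" using i0min by (meson not_le)
          ultimately show ?thesis using dsc e i01 i1n by auto
        qed
        show "e1 < i \<and> i + 1 \<le> e2 \<Longrightarrow> \<pi> i < \<pi> (i + 1)"
        proof -
          assume "e1 < i \<and> i + 1 \<le> e2"
          then have "i \<in> AS" using H e by auto
          then show ?thesis unfolding AS_def by auto
        qed
        show "e2 < i \<and> i + 1 \<le> n \<Longrightarrow> \<pi> (i + 1) < \<pi> i"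
        proof -
          assume a: "e2 < i \<and> i + 1 \<le> n"
          then have "i1 < i" using e by auto
          then have "i \<notin> AS" using i1max by (meson not_le)
          then show ?thesis using dsc a by auto
        qed
      qed
    qed
    show "{(e1, e2). valid n \<pi> e1 e2} \<subseteq> {i0 - 1, i0} \<times> {i1, i1 + 1}"
    proof clarify
      fix e1 e2 assume "valid n \<pi> e1 e2"
      then have W: "e1 \<le> e2 \<and> e2 \<le> n \<and>
       (\<forall>i. 0 < i \<and> i + 1 \<le> e1 \<longrightarrow> \<pi> (i + 1) < \<pi> i) \<and>
       (\<forall>i. e1 < i \<and> i + 1 \<le> e2 \<longrightarrow> \<pi> i < \<pi> (i + 1)) \<and>
       (\<forall>i. e2 < i \<and> i + 1 \<le> n \<longrightarrow> \<pi> (i + 1) < \<pi> i)" using valid_local by blast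
      have b1: "e1 \<le> i0"
      proof (rule ccontr)
        assume "\<not> e1 \<le> i0"
        then have "\<pi> (i0 + 1) < \<pi> i0" using W i0pos by auto
        then show False using notdsc[OF i0AS] by simp
      qed
      have b2: "i1 \<le> e2"
      proof (rule ccontr)
        assume "\<not> i1 \<le> e2"
        then have "\<pi> (i1 + 1) < \<pi> i1" using W i1n by auto
        then show False using notdsc[OF i1AS] by simp
      qed
      have b3: "i0 \<le> e1 + 1"
      proof (rule ccontr)
        assume c: "\<not> i0 \<le> e1 + 1"
        show False
        proof (cases "e1 + 1 + 1 \<le> e2")
          case True
          then have "\<pi> (e1 + 1) < \<pi> (e1 + 1 + 1)" using W by auto
          then have "e1 + 1 \<in> AS" unfolding AS_def using c i01 i1n by auto
          then show False using i0min[of "e1 + 1"] c by simp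
        next
          case False then show False using c b2 i01 by simp
        qed
      qed
      have b4: "e2 \<le> i1 + 1"
      proof (rule ccontr)
        assume c: "\<not> e2 \<le> i1 + 1"
        then have "e1 < e2 - 1 \<and> e2 - 1 + 1 \<le> e2" using b1 i01 by simp
        then have "\<pi> (e2 - 1) < \<pi> (e2 - 1 + 1)" using W by blast
        then have "e2 - 1 \<in> AS" unfolding AS_def using c W by auto
        then show False using i1max[of "e2 - 1"] c by simp
      qed
      show "e1 \<in> {i0 - 1, i0} \<and> e2 \<in> {i1, i1 + 1}" using b1 b2 b3 b4 by auto
    qed
  qed
  have "card ({i0 - 1, i0} \<times> {i1, i1 + 1}) = 4" using i0pos by (simp add: card_cartesian_product)
  then show ?thesis using eq by simp
qed


definition lab :: "nat \<Rightarrow> nat \<Rightarrow> nat \<Rightarrow> nat" where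
  "lab e1 e2 y = (if y \<le> e1 then 0 else if y \<le> e2 then 1 else 2)"

definition cnt :: "(nat \<Rightarrow> nat) \<Rightarrow> nat \<Rightarrow> nat \<Rightarrow> nat" where
  "cnt W i N = length (filter (\<lambda>c. c \<noteq> 1) (map (\<lambda>l. W (i + l)) [0..<N]))"

lemma cnt_0[simp]: "cnt W i 0 = 0" by (simp add: cnt_def)

lemma cnt_Suc: "cnt W i (Suc N) = cnt W i N + (if W (i + N) \<noteq> 1 then 1 else 0)"
  by (simp add: cnt_def)

lemma cnt_add: "cnt W i (a + b) = cnt W i a + cnt W (i + a) b"
  by (induction b) (simp_all add: cnt_Suc add.assoc)

lemma cnt_Suc_left: "cnt W i (Suc N) = (if W i \<noteq> 1 then 1 else 0) + cnt W (Suc i) N"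
  using cnt_add[of W i 1 N] by (simp add: cnt_Suc)

lemma cnt_cong: "(\<And>l. l < N \<Longrightarrow> W (i + l) = W' (j + l)) \<Longrightarrow> cnt W i N = cnt W' j N"
  unfolding cnt_def by (metis (mono_tags, lifting) atLeastLessThan_iff map_eq_conv set_upt)

lemma lab_le2: "lab e1 e2 y \<le> 2" by (simp add: lab_def)

lemma lab_mono: "y \<le> y' \<Longrightarrow> lab e1 e2 y \<le> lab e1 e2 y'" by (simp add: lab_def)

definition itin :: "nat \<Rightarrow> (nat \<Rightarrow> nat) \<Rightarrow> nat \<Rightarrow> nat \<Rightarrow> nat \<Rightarrow> nat list" where
  "itin n \<pi> e1 e2 x = map (\<lambda>k. lab e1 e2 ((\<pi> ^^ k) x)) [0..<n]"

locale trip =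
  fixes n :: nat and \<pi> :: "nat \<Rightarrow> nat" and e1 e2 x :: nat
  assumes cyc: "cyclic_perm n \<pi>" and val: "valid n \<pi> e1 e2" and xin: "x \<in> {1..n}"
begin

abbreviation p :: "nat \<Rightarrow> nat" where "p k \<equiv> (\<pi> ^^ k) x"
abbreviation W :: "nat \<Rightarrow> nat" where "W k \<equiv> lab e1 e2 ((\<pi> ^^ k) x)"

lemma perm: "\<pi> permutes {1..n}" using cyc unfolding cyclic_perm_def by simp

lemma n_pos: "n > 0" using xin by simp

lemma pin: "p k \<in> {1..n}" using funpow_in_set[OF perm xin] .

lemma pn: "p n = x" using cyc_facts(1)[OF cyc xin] .

lemma pbij: "bij_betw p {0..<n} {1..n}" using cyc_facts(2)[OF cyc xin] .

lemma pmod: "p k = p (k mod n)" using funpow_mod_period[of n \<pi> x k] pn by simp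

lemma p_inj: "p i = p j \<Longrightarrow> i mod n = j mod n"
proof -
  assume "p i = p j"
  then have "p (i mod n) = p (j mod n)" using pmod[of i] pmod[of j] by simp
  moreover have "i mod n \<in> {0..<n}" "j mod n \<in> {0..<n}" using n_pos by auto
  ultimately show ?thesis using pbij unfolding bij_betw_def inj_on_def by blast
qed

lemma pSuc: "p (Suc k) = \<pi> (p k)" by simp

lemma Wmod: "W k = itin n \<pi> e1 e2 x ! (k mod n)"
  unfolding itin_def using n_pos pmod[of k] by simp

lemma S1:
  assumes "p i < p j" "W i = W j"
  shows "if W i = 1 then p (Suc i) < p (Suc j) else p (Suc j) < p (Suc i)"
proof -
  have a: "1 \<le> p i" "p j \<le> n" using pin[of i] pin[of j] by auto
  have V: "e1 \<le> e2 \<and> e2 \<le> n \<and>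
     (\<forall>j j'. 0 < j \<and> j < j' \<and> j' \<le> e1 \<longrightarrow> \<pi> j' < \<pi> j) \<and>
     (\<forall>j j'. e1 < j \<and> j < j' \<and> j' \<le> e2 \<longrightarrow> \<pi> j < \<pi> j') \<and>
     (\<forall>j j'. e2 < j \<and> j < j' \<and> j' \<le> n \<longrightarrow> \<pi> j' < \<pi> j)" using val unfolding valid_def .
  show ?thesis
  proof (cases "p j \<le> e1")
    case True
    then have "\<pi> (p j) < \<pi> (p i)" using V a assms(1) by auto
    then show ?thesis using True assms by (simp add: lab_def)
  next
    case False
    then have ni: "\<not> p i \<le> e1" using assms by (auto simp: lab_def split: if_splits)
    show ?thesis
    proof (cases "p j \<le> e2")
      case True
      then have "\<pi> (p i) < \<pi> (p j)" using V a assms(1) ni by auto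
      then show ?thesis using True False ni assms(1) by (simp add: lab_def)
    next
      case False
      then have ni2: "\<not> p i \<le> e2" using assms ni by (auto simp: lab_def split: if_splits)
      then have "\<pi> (p j) < \<pi> (p i)" using V a assms(1) by auto
      then show ?thesis using False \<open>\<not> p j \<le> e1\<close> ni ni2 by (simp add: lab_def)
    qed
  qed
qed

lemma S2:
  assumes "\<forall>l<N. W (i + l) = W (j + l)" "p i < p j"
  shows "if even (cnt W i N) then p (i + N) < p (j + N) else p (j + N) < p (i + N)"
  using assms(1)
proof (induction N)
  case 0 then show ?case using assms(2) by simp
next
  case (Suc N)
  have IH: "if even (cnt W i N) then p (i + N) < p (j + N) else p (j + N) < p (i + N)"
    using Suc by simp
  have eqW: "W (i + N) = W (j + N)" using Suc.prems by simp
  show ?case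
  proof (cases "even (cnt W i N)")
    case True
    then have lt: "p (i + N) < p (j + N)" using IH by simp
    have "if W (i + N) = 1 then p (Suc (i + N)) < p (Suc (j + N)) else p (Suc (j + N)) < p (Suc (i + N))"
      using S1[OF lt eqW] .
    then show ?thesis using True by (auto simp: cnt_Suc split: if_splits)
  next
    case False
    then have lt: "p (j + N) < p (i + N)" using IH by simp
    have "if W (j + N) = 1 then p (Suc (j + N)) < p (Suc (i + N)) else p (Suc (i + N)) < p (Suc (j + N))"
      using S1[OF lt eqW[symmetric]] .
    then show ?thesis using False eqW by (auto simp: cnt_Suc split: if_splits)
  qed
qed

lemma S3:
  assumes "\<forall>l<k. W (i + l) = W (j + l)" "W (i + k) \<noteq> W (j + k)" "p i < p j"
  shows "W (i + k) < W (j + k) \<longleftrightarrow> even (cnt W i k)"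
proof (cases "even (cnt W i k)")
  case True
  then have "p (i + k) < p (j + k)" using S2[OF assms(1,3)] by simp
  then have "W (i + k) \<le> W (j + k)" using lab_mono by simp
  then show ?thesis using True assms(2) by simp
next
  case False
  then have "p (j + k) < p (i + k)" using S2[OF assms(1,3)] by simp
  then have "W (j + k) \<le> W (i + k)" using lab_mono by simp
  then show ?thesis using False by simp
qed

lemma chain_period:
  assumes D0: "0 < D" and per: "\<forall>k. W (k + D) = W k" and ev: "even (cnt W 0 D)"
  shows "p D = p 0"
proof -
  have perk: "W (a * D + l) = W l" for a l
  proof (induction a)
    case 0 then show ?case by simp
  next
    case (Suc a)
    have "W (Suc a * D + l) = W ((a * D + l) + D)" by (simp add: algebra_simps)
    then show ?case using per Suc by simp
  qed
  have cntk: "cnt W (a * D) D = cnt W 0 D" for a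
    by (rule cnt_cong) (use perk in simp)
  have pref: "\<forall>l<D. W (a * D + l) = W (Suc a * D + l)" for a
    by (simp only: perk) simp
  have up: False if lt: "p (0 * D) < p (1 * D)" and dir: "\<And>a. p (a * D) < p (Suc a * D) \<Longrightarrow> p (Suc a * D) < p (Suc (Suc a) * D)"
  proof -
    have c1: "p (a * D) < p (Suc a * D)" for a
      by (induction a) (use lt dir in auto)
    have c2: "p 0 < p (Suc a * D)" for a
    proof (induction a)
      case 0 then show ?case using c1[of 0] by simp
    next
      case (Suc a) then show ?case using c1[of "Suc a"] by simp
    qed
    have "p (Suc (n - 1) * D) = p 0" using pmod[of "Suc (n - 1) * D"] n_pos by simp
    then show False using c2[of "n - 1"] by simp
  qed
  have down: False if lt: "p (1 * D) < p (0 * D)" and dir: "\<And>a. p (Suc a * D) < p (a * D) \<Longrightarrow> p (Suc (Suc a) * D) < p (Suc a * D)"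
  proof -
    have c1: "p (Suc a * D) < p (a * D)" for a
      by (induction a) (use lt dir in auto)
    have c2: "p (Suc a * D) < p 0" for a
    proof (induction a)
      case 0 then show ?case using c1[of 0] by simp
    next
      case (Suc a) then show ?case using c1[of "Suc a"] by simp
    qed
    have "p (Suc (n - 1) * D) = p 0" using pmod[of "Suc (n - 1) * D"] n_pos by simp
    then show False using c2[of "n - 1"] by simp
  qed
  have d1: "p (Suc a * D) < p (Suc (Suc a) * D)" if "p (a * D) < p (Suc a * D)" for a
    using S2[OF pref that] cntk[of a] ev by (simp add: algebra_simps)
  have d2: "p (Suc (Suc a) * D) < p (Suc a * D)" if "p (Suc a * D) < p (a * D)" for a
  proof -
    have pref': "\<forall>l<D. W (Suc a * D + l) = W (a * D + l)" using pref by simp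
    have "cnt W (Suc a * D) D = cnt W 0 D" using cntk[of "Suc a"] .
    then show ?thesis using S2[OF pref' that] ev by (simp add: algebra_simps)
  qed
  show ?thesis
  proof (rule ccontr)
    assume ne: "p D \<noteq> p 0"
    then consider "p 0 < p D" | "p D < p 0" by linarith
    then show False
    proof cases
      case 1 then show False using up d1 by simp
    next
      case 2 then show False using down d2 by simp
    qed
  qed
qed

lemma period_half:
  assumes d: "0 < d" "d < n" and per: "\<forall>k. W (k + d) = W k"
  shows "n = 2 * d \<and> odd (cnt W 0 d)"
proof (cases "even (cnt W 0 d)")
  case True
  then have "p d = p 0" using chain_period[OF d(1) per] by simp
  then have "d mod n = 0 mod n" using p_inj by blast
  then show ?thesis using d by simp
next
  case False
  have per2: "\<forall>k. W (k + 2 * d) = W k"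
  proof
    fix k
    have "W (k + 2 * d) = W ((k + d) + d)" by (simp add: mult_2 add.assoc)
    also have "\<dots> = W (k + d)" using per by blast
    also have "\<dots> = W k" using per by blast
    finally show "W (k + 2 * d) = W k" .
  qed
  have "cnt W 0 (2 * d) = cnt W 0 d + cnt W d d" using cnt_add[of W 0 d d] by (simp add: mult_2)
  moreover have "cnt W d d = cnt W 0 d" by (rule cnt_cong) (use per in \<open>simp add: add.commute\<close>)
  ultimately have "even (cnt W 0 (2 * d))" by simp
  then have "p (2 * d) = p 0" using chain_period[OF _ per2] d by simp
  then have "(2 * d) mod n = 0" using p_inj[of "2 * d" 0] by simp
  then have "n dvd 2 * d" by (simp add: mod_eq_0_iff_dvd)
  then obtain c where c: "2 * d = n * c" by blast
  have "n * c < n * 2"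
  proof -
    have "n * c = 2 * d" using c by simp
    also have "\<dots> < 2 * n" using d by simp
    finally show ?thesis by (metis mult.commute)
  qed
  then have "c < 2" by simp
  moreover have "c > 0" using c d by (cases c) auto
  ultimately have "c = 1" by simp
  then show ?thesis using c False by simp
qed

end


lemma rotate_double:
  assumes "d \<le> length q"
  shows "rotate d (q @ q) = rotate d q @ rotate d q"
proof (cases "d = length q")
  case True
  then show ?thesis by (simp add: rotate_append)
next
  case False
  then have d: "d < length q" using assms by simp
  have m1: "d mod length (q @ q) = d" using d by simp
  have m2: "d mod length q = d" using d by simp
  have "rotate d (q @ q) = drop d (q @ q) @ take d (q @ q)" using rotate_drop_take[of d "q @ q"] m1 by simp
  also have "\<dots> = drop d q @ q @ take d q" using d by simp
  also have "\<dots> = drop d q @ take d q @ drop d q @ take d q"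
    by (metis append_take_drop_id append.assoc)
  also have "\<dots> = rotate d q @ rotate d q" using rotate_drop_take[of d q] m2 by simp
  finally show ?thesis .
qed

lemma nth_double: "a < 2 * length q \<Longrightarrow> (q @ q) ! a = q ! (a mod length q)"
  by (simp add: nth_append mod_if)

lemma bij_card_filter:
  assumes "bij_betw f A B"
  shows "card {a \<in> A. P (f a)} = card {b \<in> B. P b}"
proof -
  have "f ` {a \<in> A. P (f a)} = {b \<in> B. P b}" using assms unfolding bij_betw_def by auto
  moreover have "inj_on f {a \<in> A. P (f a)}" using assms unfolding bij_betw_def
    by (auto intro: inj_on_subset)
  ultimately show ?thesis by (metis card_image)
qed

context trip
begin

lemma len_itin: "length (itin n \<pi> e1 e2 x) = n" by (simp add: itin_def)

lemma set_itin: "set (itin n \<pi> e1 e2 x) \<subseteq> {0..<3}"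
  unfolding itin_def by (auto simp: lab_def)

lemma itin_shape:
  defines "w \<equiv> itin n \<pi> e1 e2 x"
  shows "primitive_word w \<or> (\<exists>m. n = 2 * m \<and> w = take m w @ take m w \<and> primitive_word (take m w)
           \<and> odd (cnt W 0 m))"
proof (cases "primitive_word w")
  case True then show ?thesis by simp
next
  case False
  then have np: "\<not> primitive_word w" .
  have lw: "length w = n" using len_itin w_def by simp
  have wne: "w \<noteq> []" using lw n_pos by auto
  have Wn: "W k = w ! (k mod n)" for k using Wmod w_def by simp
  have perrot: "\<forall>l. W (l + k) = W l" if "rotate k w = w" for k
  proof
    fix l
    have "w ! ((k + l mod n) mod n) = rotate k w ! (l mod n)"
      using nth_rotate[of "l mod n" w k] lw n_pos by simp
    then have "w ! ((k + l mod n) mod n) = w ! (l mod n)" using that by simp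
    moreover have "(k + l mod n) mod n = (l + k) mod n" by (simp add: add.commute mod_add_right_eq)
    ultimately show "W (l + k) = W l" using Wn by simp
  qed
  obtain m where m: "0 < m" "m < n" "rotate m w = w"
    using np primitive_iff_rot[OF wne] lw by auto
  have hm: "n = 2 * m \<and> odd (cnt W 0 m)" using period_half[OF m(1,2) perrot[OF m(3)]] .
  have "rotate m w = drop m w @ take m w" using rotate_drop_take[of m w] m lw by simp
  then have "drop m w @ take m w = take m w @ drop m w" using m(3) by simp
  moreover have "length (drop m w) = length (take m w)" using lw hm by simp
  ultimately have dt: "drop m w = take m w"
    using append_eq_append_conv[of "drop m w" "take m w" "take m w" "drop m w"] by blast
  have weq: "w = take m w @ take m w" using dt by (metis append_take_drop_id)
  have qne: "take m w \<noteq> []" using m lw wne by simp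
  have lq: "length (take m w) = m" using lw hm by simp
  have "primitive_word (take m w)"
    unfolding primitive_iff_rot[OF qne]
  proof (intro allI impI)
    fix d assume d: "0 < d \<and> d < length (take m w)"
    show "rotate d (take m w) \<noteq> take m w"
    proof
      assume r: "rotate d (take m w) = take m w"
      then have "rotate d w = w" using rotate_double[of d "take m w"] d weq by (metis less_imp_le)
      then have "n = 2 * d" using period_half[of d] perrot d lq hm by simp
      then show False using d lq hm by simp
    qed
  qed
  then have "\<exists>m. n = 2 * m \<and> w = take m w @ take m w \<and> primitive_word (take m w) \<and> odd (cnt W 0 m)"
    using hm weq by blast
  then show ?thesis by blast
qed

lemma p_add: "p (i + k) = (\<pi> ^^ k) (p i)"
  by (metis add.commute funpow_add comp_apply)

lemma e1_card: "e1 = card {k \<in> {0..<n}. W k = 0}"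
proof -
  have "e1 \<le> n" using val unfolding valid_def by simp
  have "{k \<in> {0..<n}. W k = 0} = {k \<in> {0..<n}. p k \<le> e1}" by (auto simp: lab_def)
  then have "card {k \<in> {0..<n}. W k = 0} = card {y \<in> {1..n}. y \<le> e1}"
    using bij_card_filter[OF pbij, of "\<lambda>y. y \<le> e1"] by simp
  also have "{y \<in> {1..n}. y \<le> e1} = {1..e1}" using \<open>e1 \<le> n\<close> by auto
  finally show ?thesis by simp
qed

lemma e2_card: "e2 = card {k \<in> {0..<n}. W k \<le> 1}"
proof -
  have "e2 \<le> n" using val unfolding valid_def by simp
  have "{k \<in> {0..<n}. W k \<le> 1} = {k \<in> {0..<n}. p k \<le> e2}"
    using val unfolding valid_def by (auto simp: lab_def)
  then have "card {k \<in> {0..<n}. W k \<le> 1} = card {y \<in> {1..n}. y \<le> e2}"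
    using bij_card_filter[OF pbij, of "\<lambda>y. y \<le> e2"] by simp
  also have "{y \<in> {1..n}. y \<le> e2} = {1..e2}" using \<open>e2 \<le> n\<close> by auto
  finally show ?thesis by simp
qed

lemma p_rank: "p k = card {j \<in> {0..<n}. p j < p k} + 1"
proof -
  have "card {j \<in> {0..<n}. p j < p k} = card {y \<in> {1..n}. y < p k}"
    using bij_card_filter[OF pbij, of "\<lambda>y. y < p k"] by simp
  also have "{y \<in> {1..n}. y < p k} = {1..<p k}" using pin[of k] by auto
  finally show ?thesis using pin[of k] by simp
qed

end

lemma same_rel_eq:
  assumes t: "trip n \<pi> e1 e2 x" and t': "trip n \<pi>' e1' e2' x'"
    and w: "itin n \<pi> e1 e2 x = itin n \<pi>' e1' e2' x'"
    and rel: "\<forall>i j. (\<pi> ^^ i) x < (\<pi> ^^ j) x \<longleftrightarrow> (\<pi>' ^^ i) x' < (\<pi>' ^^ j) x'"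
  shows "(\<pi>, e1, e2, x) = (\<pi>', e1', e2', x')"
proof -
  have WW: "lab e1 e2 ((\<pi> ^^ k) x) = lab e1' e2' ((\<pi>' ^^ k) x')" for k
    using trip.Wmod[OF t, of k] trip.Wmod[OF t', of k] w by simp
  have "e1 = e1'" using trip.e1_card[OF t] trip.e1_card[OF t'] WW by simp
  moreover have "e2 = e2'" using trip.e2_card[OF t] trip.e2_card[OF t'] WW by simp
  moreover have pp: "(\<pi> ^^ k) x = (\<pi>' ^^ k) x'" for k
    using trip.p_rank[OF t, of k] trip.p_rank[OF t', of k] rel by simp
  moreover have "\<pi> = \<pi>'"
  proof
    fix y
    show "\<pi> y = \<pi>' y"
    proof (cases "y \<in> {1..n}")
      case True
      then obtain k where "(\<pi> ^^ k) x = y"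
        using trip.pbij[OF t] unfolding bij_betw_def by (metis imageE)
      moreover have "(\<pi> ^^ Suc k) x = (\<pi>' ^^ Suc k) x'" using pp .
      ultimately show ?thesis using pp[of k] by simp
    next
      case False
      then show ?thesis using trip.perm[OF t] trip.perm[OF t'] by (simp add: permutes_not_in)
    qed
  qed
  ultimately show ?thesis using pp[of 0] by simp
qed

lemma uniq_dir:
  assumes t: "trip n \<pi> e1 e2 x" and t': "trip n \<pi>' e1' e2' x'"
    and WW: "\<And>k. lab e1 e2 ((\<pi> ^^ k) x) = lab e1' e2' ((\<pi>' ^^ k) x')"
    and ex: "\<exists>k. lab e1 e2 ((\<pi> ^^ (i + k)) x) \<noteq> lab e1 e2 ((\<pi> ^^ (j + k)) x)"
    and lt: "(\<pi> ^^ i) x < (\<pi> ^^ j) x"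
  shows "(\<pi>' ^^ i) x' < (\<pi>' ^^ j) x'"
proof -
  define W where "W k = lab e1 e2 ((\<pi> ^^ k) x)" for k
  define k0 where "k0 = (LEAST k. W (i + k) \<noteq> W (j + k))"
  have d: "W (i + k0) \<noteq> W (j + k0)" using ex unfolding k0_def W_def by (rule LeastI_ex)
  have pre: "\<forall>l<k0. W (i + l) = W (j + l)" unfolding k0_def using not_less_Least by blast
  have W': "lab e1' e2' ((\<pi>' ^^ k) x') = W k" for k using WW W_def by simp
  have c1: "W (i + k0) < W (j + k0) \<longleftrightarrow> even (cnt W i k0)"
    using trip.S3[OF t, of k0 i j] pre d lt unfolding W_def by simp
  show ?thesis
  proof (rule ccontr)
    assume "\<not> ?thesis"
    moreover have "(\<pi>' ^^ i) x' \<noteq> (\<pi>' ^^ j) x'"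
    proof
      assume "(\<pi>' ^^ i) x' = (\<pi>' ^^ j) x'"
      then have "(\<pi>' ^^ (i + k0)) x' = (\<pi>' ^^ (j + k0)) x'"
        using trip.p_add[OF t', of i k0] trip.p_add[OF t', of j k0] by simp
      then show False using d W' by metis
    qed
    ultimately have lt': "(\<pi>' ^^ j) x' < (\<pi>' ^^ i) x'" by simp
    have c2: "W (j + k0) < W (i + k0) \<longleftrightarrow> even (cnt W j k0)"
      using trip.S3[OF t', of k0 j i] pre d lt' W' unfolding W_def by (simp add: cnt_def)
    have "cnt W j k0 = cnt W i k0" by (rule cnt_cong) (use pre in simp)
    then show False using c1 c2 d by auto
  qed
qed

lemma uniq_rel:
  assumes t: "trip n \<pi> e1 e2 x" and t': "trip n \<pi>' e1' e2' x'"
    and WW: "\<And>k. lab e1 e2 ((\<pi> ^^ k) x) = lab e1' e2' ((\<pi>' ^^ k) x')"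
    and ex: "\<exists>k. lab e1 e2 ((\<pi> ^^ (i + k)) x) \<noteq> lab e1 e2 ((\<pi> ^^ (j + k)) x)"
  shows "(\<pi> ^^ i) x < (\<pi> ^^ j) x \<longleftrightarrow> (\<pi>' ^^ i) x' < (\<pi>' ^^ j) x'"
proof
  show "(\<pi> ^^ i) x < (\<pi> ^^ j) x \<Longrightarrow> (\<pi>' ^^ i) x' < (\<pi>' ^^ j) x'"
    using uniq_dir[OF t t' WW ex] by blast
  have ex': "\<exists>k. lab e1' e2' ((\<pi>' ^^ (i + k)) x') \<noteq> lab e1' e2' ((\<pi>' ^^ (j + k)) x')"
    using ex WW by metis
  show "(\<pi>' ^^ i) x' < (\<pi>' ^^ j) x' \<Longrightarrow> (\<pi> ^^ i) x < (\<pi> ^^ j) x"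
    using uniq_dir[OF t' t _ ex'] WW by metis
qed


context trip
begin

lemma pair_rel:
  assumes n2: "n = 2 * m" and per: "\<forall>l. W (l + m) = W l"
  shows "p i < p (i + m) \<longleftrightarrow> ((p 0 < p m) \<longleftrightarrow> even (cnt W 0 i))"
proof -
  have m0: "0 < m" using n2 n_pos by simp
  have ne: "p 0 \<noteq> p m"
  proof
    assume "p 0 = p m"
    then have "0 mod n = m mod n" using p_inj by blast
    then show False using n2 m0 by simp
  qed
  have pre: "\<forall>l<i. W (0 + l) = W (m + l)" using per by (simp add: add.commute)
  have pre': "\<forall>l<i. W (m + l) = W (0 + l)" using per by (simp add: add.commute)
  have cc: "cnt W m i = cnt W 0 i" by (rule cnt_cong) (use per in \<open>simp add: add.commute\<close>)
  show ?thesis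
  proof (cases "p 0 < p m")
    case True
    then have "if even (cnt W 0 i) then p (0 + i) < p (m + i) else p (m + i) < p (0 + i)"
      using S2[OF pre] by blast
    then show ?thesis using True by (auto simp: add.commute split: if_splits)
  next
    case False
    then have lt: "p m < p 0" using ne by simp
    have "if even (cnt W m i) then p (m + i) < p (0 + i) else p (0 + i) < p (m + i)"
      using S2[OF pre' lt] by blast
    then show ?thesis using False cc by (auto simp: add.commute split: if_splits)
  qed
qed

lemma rot_eq_itin:
  assumes "\<forall>k. W (i + k) = W (j + k)"
  shows "rotate (i mod n) (itin n \<pi> e1 e2 x) = rotate (j mod n) (itin n \<pi> e1 e2 x)"
proof (rule nth_equalityI)
  show "length (rotate (i mod n) (itin n \<pi> e1 e2 x)) = length (rotate (j mod n) (itin n \<pi> e1 e2 x))"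
    by simp
  fix l assume l: "l < length (rotate (i mod n) (itin n \<pi> e1 e2 x))"
  then have ln: "l < n" by (simp add: len_itin)
  have "rotate (i mod n) (itin n \<pi> e1 e2 x) ! l = itin n \<pi> e1 e2 x ! ((i mod n + l) mod n)"
    using nth_rotate[of l "itin n \<pi> e1 e2 x" "i mod n"] ln by (simp add: len_itin)
  also have "\<dots> = W (i + l)" using Wmod[of "i + l"] by (simp add: mod_add_left_eq)
  also have "\<dots> = W (j + l)" using assms by simp
  also have "\<dots> = itin n \<pi> e1 e2 x ! ((j mod n + l) mod n)" using Wmod[of "j + l"] by (simp add: mod_add_left_eq)
  also have "\<dots> = rotate (j mod n) (itin n \<pi> e1 e2 x) ! l"
    using nth_rotate[of l "itin n \<pi> e1 e2 x" "j mod n"] ln by (simp add: len_itin)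
  finally show "rotate (i mod n) (itin n \<pi> e1 e2 x) ! l = rotate (j mod n) (itin n \<pi> e1 e2 x) ! l" .
qed

lemma W_qq:
  assumes n2: "n = 2 * m" and w: "itin n \<pi> e1 e2 x = q @ q" and lq: "length q = m"
  shows "W l = q ! (l mod m)"
proof -
  have m0: "0 < m" using n2 n_pos by simp
  have "W l = (q @ q) ! (l mod n)" using Wmod[of l] w by simp
  also have "\<dots> = q ! ((l mod n) mod m)" using nth_double[of "l mod n" q] n2 lq m0 by simp
  also have "(l mod n) mod m = l mod m" using n2 by (simp add: mod_mod_cancel)
  finally show ?thesis .
qed

lemma rot_eq_q:
  assumes n2: "n = 2 * m" and w: "itin n \<pi> e1 e2 x = q @ q" and lq: "length q = m"
    and eq: "\<forall>k. W (i + k) = W (j + k)"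
  shows "rotate (i mod m) q = rotate (j mod m) q"
proof (rule nth_equalityI)
  have m0: "0 < m" using n2 n_pos by simp
  show "length (rotate (i mod m) q) = length (rotate (j mod m) q)" by simp
  fix l assume l: "l < length (rotate (i mod m) q)"
  then have ln: "l < m" using lq by simp
  have "rotate (i mod m) q ! l = q ! ((i mod m + l) mod m)"
    using nth_rotate[of l q "i mod m"] ln lq by simp
  also have "\<dots> = W (i + l)" using W_qq[OF n2 w lq, of "i + l"] by (simp add: mod_add_left_eq)
  also have "\<dots> = W (j + l)" using eq by simp
  also have "\<dots> = q ! ((j mod m + l) mod m)" using W_qq[OF n2 w lq, of "j + l"] by (simp add: mod_add_left_eq)
  also have "\<dots> = rotate (j mod m) q ! l" using nth_rotate[of l q "j mod m"] ln lq by simp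
  finally show "rotate (i mod m) q ! l = rotate (j mod m) q ! l" .
qed

end

lemma mod_two_cases:
  fixes a b m :: nat
  assumes "a < 2 * m" "b < 2 * m" "a mod m = b mod m"
  shows "a = b \<or> b = a + m \<or> a = b + m"
proof (cases "a < m")
  case True
  note ta = this
  show ?thesis
  proof (cases "b < m")
    case True then show ?thesis using ta assms by simp
  next
    case False
    then have "b mod m = b - m" using assms by (simp add: le_mod_geq)
    then show ?thesis using ta assms False by simp
  qed
next
  case False
  note fa = this
  then have am: "a mod m = a - m" using assms by (simp add: le_mod_geq)
  show ?thesis
  proof (cases "b < m")
    case True then show ?thesis using fa am assms by simp
  next
    case False
    then have "b mod m = b - m" using assms by (simp add: le_mod_geq)
    then show ?thesis using fa am assms False by simp
  qed
qed

lemma fiber_prim: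
  assumes t: "trip n \<pi> e1 e2 x" and t': "trip n \<pi>' e1' e2' x'"
    and w: "itin n \<pi> e1 e2 x = itin n \<pi>' e1' e2' x'"
    and prim: "primitive_word (itin n \<pi> e1 e2 x)"
  shows "(\<pi>, e1, e2, x) = (\<pi>', e1', e2', x')"
proof (rule same_rel_eq[OF t t' w], intro allI)
  fix i j
  have WW: "lab e1 e2 ((\<pi> ^^ k) x) = lab e1' e2' ((\<pi>' ^^ k) x')" for k
    using trip.Wmod[OF t, of k] trip.Wmod[OF t', of k] w by simp
  show "(\<pi> ^^ i) x < (\<pi> ^^ j) x \<longleftrightarrow> (\<pi>' ^^ i) x' < (\<pi>' ^^ j) x'"
  proof (cases "\<exists>k. lab e1 e2 ((\<pi> ^^ (i + k)) x) \<noteq> lab e1 e2 ((\<pi> ^^ (j + k)) x)")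
    case True
    then show ?thesis using uniq_rel[OF t t' WW] by blast
  next
    case False
    then have "rotate (i mod n) (itin n \<pi> e1 e2 x) = rotate (j mod n) (itin n \<pi> e1 e2 x)"
      using trip.rot_eq_itin[OF t] by blast
    then have ij: "i mod n = j mod n"
      using rotate_inj_prim[OF prim] trip.len_itin[OF t] trip.n_pos[OF t] by simp
    then have "(\<pi> ^^ i) x = (\<pi> ^^ j) x" using trip.pmod[OF t, of i] trip.pmod[OF t, of j] by simp
    moreover have "(\<pi>' ^^ i) x' = (\<pi>' ^^ j) x'" using trip.pmod[OF t', of i] trip.pmod[OF t', of j] ij by simp
    ultimately show ?thesis by simp
  qed
qed

lemma fiber_qq:
  assumes t: "trip n \<pi> e1 e2 x" and t': "trip n \<pi>' e1' e2' x'"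
    and w: "itin n \<pi> e1 e2 x = itin n \<pi>' e1' e2' x'"
    and n2: "n = 2 * m" and wq: "itin n \<pi> e1 e2 x = q @ q" and lq: "length q = m"
    and prim: "primitive_word q"
    and same: "(\<pi> ^^ 0) x < (\<pi> ^^ m) x \<longleftrightarrow> (\<pi>' ^^ 0) x' < (\<pi>' ^^ m) x'"
  shows "(\<pi>, e1, e2, x) = (\<pi>', e1', e2', x')"
proof (rule same_rel_eq[OF t t' w], intro allI)
  fix i j
  have m0: "0 < m" using n2 trip.n_pos[OF t] by simp
  have WW: "lab e1 e2 ((\<pi> ^^ k) x) = lab e1' e2' ((\<pi>' ^^ k) x')" for k
    using trip.Wmod[OF t, of k] trip.Wmod[OF t', of k] w by simp
  have per: "\<forall>l. lab e1 e2 ((\<pi> ^^ (l + m)) x) = lab e1 e2 ((\<pi> ^^ l) x)"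
    using trip.W_qq[OF t n2 wq lq] by simp
  have per': "\<forall>l. lab e1' e2' ((\<pi>' ^^ (l + m)) x') = lab e1' e2' ((\<pi>' ^^ l) x')"
    using per WW by simp
  have cc: "cnt (\<lambda>k. lab e1 e2 ((\<pi> ^^ k) x)) 0 a = cnt (\<lambda>k. lab e1' e2' ((\<pi>' ^^ k) x')) 0 a" for a
    by (rule cnt_cong) (use WW in simp)
  have PR: "(\<pi> ^^ a) x < (\<pi> ^^ (a + m)) x \<longleftrightarrow> (\<pi>' ^^ a) x' < (\<pi>' ^^ (a + m)) x'" for a
    using trip.pair_rel[OF t n2 per, of a] trip.pair_rel[OF t' n2 per', of a] same cc by simp
  have NE: "(\<pi> ^^ a) x \<noteq> (\<pi> ^^ (a + m)) x" "(\<pi>' ^^ a) x' \<noteq> (\<pi>' ^^ (a + m)) x'" for a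
  proof -
    have "a mod n \<noteq> (a + m) mod n"
    proof -
      define a' where "a' = a mod n"
      have a': "a' < 2 * m" using n2 m0 a'_def by simp
      have "(a + m) mod n = (a' + m) mod n" using a'_def by (simp add: mod_add_left_eq)
      moreover have "(a' + m) mod n \<noteq> a'"
      proof (cases "a' < m")
        case True then show ?thesis using n2 m0 by simp
      next
        case False
        then have "(a' + m) mod n = a' + m - n" using n2 a' by (simp add: mod_if)
        then show ?thesis using n2 m0 False by simp
      qed
      ultimately show ?thesis using a'_def by simp
    qed
    then show "(\<pi> ^^ a) x \<noteq> (\<pi> ^^ (a + m)) x" "(\<pi>' ^^ a) x' \<noteq> (\<pi>' ^^ (a + m)) x'"
      using trip.p_inj[OF t, of a "a + m"] trip.p_inj[OF t', of a "a + m"] by auto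
  qed
  show "(\<pi> ^^ i) x < (\<pi> ^^ j) x \<longleftrightarrow> (\<pi>' ^^ i) x' < (\<pi>' ^^ j) x'"
  proof (cases "\<exists>k. lab e1 e2 ((\<pi> ^^ (i + k)) x) \<noteq> lab e1 e2 ((\<pi> ^^ (j + k)) x)")
    case True
    then show ?thesis using uniq_rel[OF t t' WW] by blast
  next
    case False
    then have "rotate (i mod m) q = rotate (j mod m) q"
      using trip.rot_eq_q[OF t n2 wq lq] by blast
    then have ij: "i mod m = j mod m" using rotate_inj_prim[OF prim] lq m0 by simp
    define a where "a = i mod n"
    define b where "b = j mod n"
    have ab: "a < 2 * m" "b < 2 * m" using n2 m0 a_def b_def by auto
    have "a mod m = b mod m" using ij n2 a_def b_def by (simp add: mod_mod_cancel)
    then have cases: "a = b \<or> b = a + m \<or> a = b + m" using mod_two_cases ab by blast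
    have pa: "(\<pi> ^^ i) x = (\<pi> ^^ a) x" "(\<pi> ^^ j) x = (\<pi> ^^ b) x"
      using trip.pmod[OF t, of i] trip.pmod[OF t, of j] a_def b_def by auto
    have pa': "(\<pi>' ^^ i) x' = (\<pi>' ^^ a) x'" "(\<pi>' ^^ j) x' = (\<pi>' ^^ b) x'"
      using trip.pmod[OF t', of i] trip.pmod[OF t', of j] a_def b_def by auto
    show ?thesis
    proof -
      consider "a = b" | "b = a + m" | "a = b + m" using cases by blast
      then show ?thesis
      proof cases
        case 1 then show ?thesis using pa pa' by simp
      next
        case 2 then show ?thesis using pa pa' PR[of a] by simp
      next
        case 3 then show ?thesis using pa pa' PR[of b] NE[of b] by auto
      qed
    qed
  qed
qed


definition lexlt :: "(nat \<Rightarrow> nat) \<Rightarrow> (nat \<Rightarrow> nat) \<Rightarrow> bool" where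
  "lexlt u v \<longleftrightarrow> (\<exists>k. (\<forall>l<k. u l = v l) \<and> u k < v k)"

lemma lexlt_irrefl: "\<not> lexlt u u" unfolding lexlt_def by auto

lemma lexlt_trans:
  assumes "lexlt u v" "lexlt v z" shows "lexlt u z"
proof -
  obtain k1 where k1: "\<forall>l<k1. u l = v l" "u k1 < v k1" using assms(1) unfolding lexlt_def by blast
  obtain k2 where k2: "\<forall>l<k2. v l = z l" "v k2 < z k2" using assms(2) unfolding lexlt_def by blast
  show ?thesis unfolding lexlt_def
  proof (cases "k1 < k2")
    case True
    then show "\<exists>k. (\<forall>l<k. u l = z l) \<and> u k < z k"
      using k1 k2 by (intro exI[of _ k1]) auto
  next
    case False
    show "\<exists>k. (\<forall>l<k. u l = z l) \<and> u k < z k"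
    proof (cases "k1 = k2")
      case True
      then show ?thesis using k1 k2 by (intro exI[of _ k1]) auto
    next
      case False
      then have "k2 < k1" using \<open>\<not> k1 < k2\<close> by simp
      then show ?thesis using k1 k2 by (intro exI[of _ k2]) auto
    qed
  qed
qed

lemma lexlt_asym: "lexlt u v \<Longrightarrow> \<not> lexlt v u"
  using lexlt_trans lexlt_irrefl by blast

lemma lexlt_total:
  assumes "u \<noteq> v" shows "lexlt u v \<or> lexlt v u"
proof -
  have ex: "\<exists>k. u k \<noteq> v k" using assms by auto
  define k where "k = (LEAST k. u k \<noteq> v k)"
  have d: "u k \<noteq> v k" unfolding k_def by (rule LeastI_ex[OF ex])
  have pre: "\<forall>l<k. u l = v l" unfolding k_def using not_less_Least by blast
  show ?thesis
  proof (cases "u k < v k")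
    case True then show ?thesis unfolding lexlt_def using pre by blast
  next
    case False then have "v k < u k" using d by simp
    then show ?thesis unfolding lexlt_def using pre by (metis)
  qed
qed

definition Wf :: "nat list \<Rightarrow> nat \<Rightarrow> nat" where
  "Wf w k = w ! (k mod length w)"

definition key :: "nat list \<Rightarrow> nat \<Rightarrow> nat \<Rightarrow> nat" where
  "key w i k = (if odd (cnt (Wf w) i k) then 2 - Wf w (i + k) else Wf w (i + k))"

lemma Wf_le:
  assumes "set w \<subseteq> {0..<3}" "w \<noteq> []"
  shows "Wf w k \<le> 2"
proof -
  have "w ! (k mod length w) \<in> set w" using assms(2) by simp
  then show ?thesis using assms(1) unfolding Wf_def by auto
qed

lemma Wf_mod: "Wf w (k mod length w) = Wf w k"
  unfolding Wf_def by simp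

lemma key0: "key w i 0 = Wf w i" by (simp add: key_def)

lemma key_le:
  assumes "set w \<subseteq> {0..<3}" "w \<noteq> []" shows "key w i k \<le> 2"
  using Wf_le[OF assms] by (simp add: key_def)

lemma key_Suc:
  assumes "set w \<subseteq> {0..<3}" "w \<noteq> []"
  shows "key w i (Suc k) = (if Wf w i \<noteq> 1 then 2 - key w (Suc i) k else key w (Suc i) k)"
  using Wf_le[OF assms, of "Suc i + k"] cnt_Suc_left[of "Wf w" i k]
  by (auto simp: key_def)

lemma key_Suc_inv:
  assumes "set w \<subseteq> {0..<3}" "w \<noteq> []"
  shows "key w (Suc i) k = (if Wf w i \<noteq> 1 then 2 - key w i (Suc k) else key w i (Suc k))"
  using key_Suc[OF assms, of i k] key_le[OF assms, of "Suc i" k] by auto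

lemma key_mod: "key w (i mod length w) = key w i"
proof
  fix k
  have "cnt (Wf w) (i mod length w) k = cnt (Wf w) i k"
    by (rule cnt_cong) (metis Wf_mod mod_add_left_eq)
  moreover have "Wf w (i mod length w + k) = Wf w (i + k)" by (metis Wf_mod mod_add_left_eq)
  ultimately show "key w (i mod length w) k = key w i k" by (simp add: key_def)
qed

lemma key_eq_W:
  assumes "set w \<subseteq> {0..<3}" "w \<noteq> []" "key w i = key w j"
  shows "Wf w (i + k) = Wf w (j + k)"
proof (induction k rule: less_induct)
  case (less k)
  have "cnt (Wf w) i k = cnt (Wf w) j k" by (rule cnt_cong) (use less in simp)
  moreover have "key w i k = key w j k" using assms(3) by simp
  ultimately show ?case using Wf_le[OF assms(1,2), of "i + k"] Wf_le[OF assms(1,2), of "j + k"]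
    by (auto simp: key_def split: if_splits)
qed

lemma key_eq_rot:
  assumes "set w \<subseteq> {0..<3}" "w \<noteq> []" "key w i = key w j"
  shows "rotate (i mod length w) w = rotate (j mod length w) w"
proof (rule nth_equalityI)
  show "length (rotate (i mod length w) w) = length (rotate (j mod length w) w)" by simp
  fix l assume "l < length (rotate (i mod length w) w)"
  then have l: "l < length w" by simp
  have "rotate (i mod length w) w ! l = Wf w (i + l)"
    using nth_rotate[OF l, of "i mod length w"] unfolding Wf_def by (simp add: mod_add_left_eq)
  also have "\<dots> = Wf w (j + l)" using key_eq_W[OF assms] .
  also have "\<dots> = rotate (j mod length w) w ! l"
    using nth_rotate[OF l, of "j mod length w"] unfolding Wf_def by (simp add: mod_add_left_eq)
  finally show "rotate (i mod length w) w ! l = rotate (j mod length w) w ! l" .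
qed


definition tb :: "nat list \<Rightarrow> nat \<Rightarrow> nat" where
  "tb w i = (if (i < length w div 2) = even (cnt (Wf w) 0 (i mod (length w div 2))) then 0 else 1)"

definition ltw :: "nat list \<Rightarrow> nat \<Rightarrow> nat \<Rightarrow> bool" where
  "ltw w i j \<longleftrightarrow> lexlt (key w i) (key w j) \<or> (key w i = key w j \<and> tb w i < tb w j)"

locale cons =
  fixes w :: "nat list"
  assumes ne: "w \<noteq> []" and st: "set w \<subseteq> {0..<3}"
    and H: "\<And>i j. i < length w \<Longrightarrow> j < length w \<Longrightarrow> i \<noteq> j \<Longrightarrow> key w i = key w j \<Longrightarrow> tb w i \<noteq> tb w j"
    and HT: "\<And>i j. i < length w \<Longrightarrow> j < length w \<Longrightarrow> key w i = key w j \<Longrightarrow> tb w i < tb w j \<Longrightarrow>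
      (if Wf w i = 1 then tb w (Suc i mod length w) < tb w (Suc j mod length w)
       else tb w (Suc j mod length w) < tb w (Suc i mod length w))"
begin

abbreviation N where "N \<equiv> length w"

lemma N_pos: "N > 0" using ne by simp

lemma lt_irrefl: "\<not> ltw w i i" unfolding ltw_def using lexlt_irrefl by auto

lemma lt_trans: "ltw w i j \<Longrightarrow> ltw w j k \<Longrightarrow> ltw w i k"
  unfolding ltw_def using lexlt_trans by auto

lemma lt_asym: "ltw w i j \<Longrightarrow> \<not> ltw w j i" using lt_trans lt_irrefl by blast

lemma lt_total: "i < N \<Longrightarrow> j < N \<Longrightarrow> i \<noteq> j \<Longrightarrow> ltw w i j \<or> ltw w j i"
  unfolding ltw_def using lexlt_total H by (metis linorder_neqE_nat)

definition rk :: "nat \<Rightarrow> nat" where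
  "rk i = card {j \<in> {0..<N}. ltw w j i} + 1"

lemma rk_lt: assumes "i < N" "j < N" "ltw w i j" shows "rk i < rk j"
proof -
  have "{l \<in> {0..<N}. ltw w l i} \<subset> {l \<in> {0..<N}. ltw w l j}"
  proof
    show "{l \<in> {0..<N}. ltw w l i} \<subseteq> {l \<in> {0..<N}. ltw w l j}" using lt_trans assms(3) by blast
    have "i \<in> {l \<in> {0..<N}. ltw w l j}" "i \<notin> {l \<in> {0..<N}. ltw w l i}" using assms lt_irrefl by auto
    then show "{l \<in> {0..<N}. ltw w l i} \<noteq> {l \<in> {0..<N}. ltw w l j}" by blast
  qed
  then have "card {l \<in> {0..<N}. ltw w l i} < card {l \<in> {0..<N}. ltw w l j}"
    by (rule psubset_card_mono[rotated]) simp
  then show ?thesis unfolding rk_def by simp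
qed

lemma rk_iff: assumes "i < N" "j < N" shows "rk i < rk j \<longleftrightarrow> ltw w i j"
proof
  assume r: "rk i < rk j"
  show "ltw w i j"
  proof (rule ccontr)
    assume "\<not> ltw w i j"
    moreover have "i \<noteq> j" using r by auto
    ultimately have "ltw w j i" using lt_total assms by blast
    then show False using rk_lt[OF assms(2,1)] r by simp
  qed
qed (use rk_lt assms in blast)

lemma rk_range: assumes "i < N" shows "rk i \<in> {1..N}"
proof -
  have "{j \<in> {0..<N}. ltw w j i} \<subseteq> {0..<N} - {i}" using lt_irrefl by auto
  then have "card {j \<in> {0..<N}. ltw w j i} \<le> card ({0..<N} - {i})" by (intro card_mono) auto
  also have "\<dots> = N - 1" using assms by simp
  finally show ?thesis unfolding rk_def using assms by simp
qed

lemma rk_inj: "inj_on rk {0..<N}"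
proof (rule inj_onI)
  fix i j assume ij: "i \<in> {0..<N}" "j \<in> {0..<N}" "rk i = rk j"
  show "i = j"
  proof (rule ccontr)
    assume "i \<noteq> j"
    then have "ltw w i j \<or> ltw w j i" using lt_total ij by simp
    then show False using rk_lt ij by fastforce
  qed
qed

lemma rk_bij: "bij_betw rk {0..<N} {1..N}"
proof -
  have "rk ` {0..<N} = {1..N}"
  proof (rule card_subset_eq)
    show "finite {1..N}" by simp
    show "rk ` {0..<N} \<subseteq> {1..N}" using rk_range by auto
    show "card (rk ` {0..<N}) = card {1..N}" using rk_inj by (simp add: card_image)
  qed
  then show ?thesis using rk_inj unfolding bij_betw_def by simp
qed

lemma rk_img: "rk ` {0..<N} = {1..N}" using rk_bij unfolding bij_betw_def by simp

lemma rk_surj: assumes "y \<in> {1..N}" obtains i where "i < N" "y = rk i"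
proof -
  have "y \<in> rk ` {0..<N}" using assms rk_img by simp
  then obtain i where "i \<in> {0..<N}" "y = rk i" by (rule imageE) simp
  then show ?thesis using that by simp
qed

definition pic :: "nat \<Rightarrow> nat" where
  "pic y = (if y \<in> {1..N} then rk (Suc (inv_into {0..<N} rk y) mod N) else y)"

lemma pic_rk: "i < N \<Longrightarrow> pic (rk i) = rk (Suc i mod N)"
  unfolding pic_def using rk_range[of i] rk_inj by simp

lemma pic_perm: "pic permutes {1..N}"
proof (rule bij_imp_permutes)
  have img: "pic ` {1..N} \<subseteq> {1..N}"
  proof
    fix z assume "z \<in> pic ` {1..N}"
    then obtain y where y: "y \<in> {1..N}" "z = pic y" by blast
    then obtain i where i: "i < N" "y = rk i" using rk_surj by metis
    show "z \<in> {1..N}" using y i pic_rk rk_range N_pos by simp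
  qed
  have inj: "inj_on pic {1..N}"
  proof (rule inj_onI)
    fix y y' assume a: "y \<in> {1..N}" "y' \<in> {1..N}" "pic y = pic y'"
    obtain i where i: "i < N" "y = rk i" using rk_surj[OF a(1)] by metis
    obtain j where j: "j < N" "y' = rk j" using rk_surj[OF a(2)] by metis
    have "rk (Suc i mod N) = rk (Suc j mod N)" using a(3) i j pic_rk by simp
    then have "Suc i mod N = Suc j mod N" using rk_inj N_pos unfolding inj_on_def by simp
    then have "i = j" using i j by (auto simp: mod_Suc split: if_splits)
    then show "y = y'" using i j by simp
  qed
  show "bij_betw pic {1..N} {1..N}" using endo_inj_surj[OF _ img inj] inj
    unfolding bij_betw_def by simp
  fix x assume "x \<notin> {1..N}"
  then show "pic x = x" unfolding pic_def by (simp only: if_False)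
qed

lemma pic_pow: "i < N \<Longrightarrow> (pic ^^ k) (rk i) = rk ((i + k) mod N)"
proof (induction k)
  case 0 then show ?case by simp
next
  case (Suc k)
  have "(pic ^^ Suc k) (rk i) = pic (rk ((i + k) mod N))" using Suc by simp
  also have "\<dots> = rk (Suc ((i + k) mod N) mod N)" using pic_rk N_pos by simp
  also have "Suc ((i + k) mod N) mod N = (i + Suc k) mod N" by (simp add: mod_Suc_eq)
  finally show ?case .
qed

lemma pic_cyc: "cyclic_perm N pic"
  unfolding cyclic_perm_def
proof (intro conjI ballI)
  show "pic permutes {1..N}" by (rule pic_perm)
  fix y z assume yz: "y \<in> {1..N}" "z \<in> {1..N}"
  obtain a where a: "a < N" "y = rk a" using rk_surj[OF yz(1)] by metis
  obtain b where b: "b < N" "z = rk b" using rk_surj[OF yz(2)] by metis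
  have "(pic ^^ (b + N - a)) y = rk ((a + (b + N - a)) mod N)" using pic_pow a by simp
  also have "(a + (b + N - a)) mod N = b" using a b by simp
  finally show "\<exists>j. (pic ^^ j) y = z" using b by blast
qed

lemma W_lt: "i < N \<Longrightarrow> j < N \<Longrightarrow> Wf w i < Wf w j \<Longrightarrow> ltw w i j"
  unfolding ltw_def lexlt_def by (intro disjI1 exI[of _ 0]) (simp add: key0)

definition Z :: "nat \<Rightarrow> nat" where "Z c = card {j \<in> {0..<N}. Wf w j \<le> c}"

lemma rk_le_Z: assumes "i < N" shows "rk i \<le> Z c \<longleftrightarrow> Wf w i \<le> c"
proof
  assume "Wf w i \<le> c"
  have "{j \<in> {0..<N}. ltw w j i} \<subseteq> {j \<in> {0..<N}. Wf w j \<le> c} - {i}"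
  proof
    fix j assume j: "j \<in> {j \<in> {0..<N}. ltw w j i}"
    have "Wf w j \<le> c"
    proof (rule ccontr)
      assume "\<not> Wf w j \<le> c"
      then have "ltw w i j" using W_lt[OF assms, of j] j \<open>Wf w i \<le> c\<close> by simp
      then show False using lt_asym j by blast
    qed
    then show "j \<in> {j \<in> {0..<N}. Wf w j \<le> c} - {i}" using j lt_irrefl by auto
  qed
  then have "card {j \<in> {0..<N}. ltw w j i} \<le> card ({j \<in> {0..<N}. Wf w j \<le> c} - {i})"
    by (intro card_mono) auto
  also have "\<dots> = Z c - 1" unfolding Z_def using assms \<open>Wf w i \<le> c\<close> by simp
  finally have le: "card {j \<in> {0..<N}. ltw w j i} \<le> Z c - 1" .
  have "i \<in> {j \<in> {0..<N}. Wf w j \<le> c}" using assms \<open>Wf w i \<le> c\<close> by simp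
  moreover have "finite {j \<in> {0..<N}. Wf w j \<le> c}" by simp
  ultimately have "card {j \<in> {0..<N}. Wf w j \<le> c} > 0" using card_gt_0_iff by blast
  then have "Z c \<ge> 1" unfolding Z_def by simp
  then show "rk i \<le> Z c" unfolding rk_def using le by linarith
next
  assume r: "rk i \<le> Z c"
  show "Wf w i \<le> c"
  proof (rule ccontr)
    assume nc: "\<not> Wf w i \<le> c"
    have "{j \<in> {0..<N}. Wf w j \<le> c} \<subseteq> {j \<in> {0..<N}. ltw w j i}"
      using W_lt assms nc by auto
    then have "Z c \<le> card {j \<in> {0..<N}. ltw w j i}" unfolding Z_def by (intro card_mono) auto
    then show False using r unfolding rk_def by simp
  qed
qed

lemma lab_rk: assumes "i < N" shows "lab (Z 0) (Z 1) (rk i) = Wf w i"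
  using rk_le_Z[OF assms, of 0] rk_le_Z[OF assms, of 1] Wf_le[OF st ne, of i]
  unfolding lab_def by auto

end


context cons
begin

lemma key_suc_mod: "key w (Suc i mod N) = key w (Suc i)" using key_mod[of w "Suc i"] by simp

lemma STEP:
  assumes ij: "i < N" "j < N" and lt: "ltw w i j" and eqW: "Wf w i = Wf w j"
  shows "if Wf w i = 1 then ltw w (Suc i mod N) (Suc j mod N) else ltw w (Suc j mod N) (Suc i mod N)"
proof -
  have KS: "key w (Suc a) l = (if Wf w a \<noteq> 1 then 2 - key w a (Suc l) else key w a (Suc l))" for a l
    using key_Suc_inv[OF st ne] .
  have KL: "key w a l \<le> 2" for a l using key_le[OF st ne] .
  show ?thesis
  proof (cases "lexlt (key w i) (key w j)")
    case True
    then obtain k where k: "\<forall>l<k. key w i l = key w j l" "key w i k < key w j k"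
      unfolding lexlt_def by blast
    have "k \<noteq> 0"
    proof
      assume "k = 0"
      then show False using k(2) eqW key0[of w i] key0[of w j] by simp
    qed
    then obtain k' where k': "k = Suc k'" by (cases k) auto
    have pre: "\<forall>l<k'. key w (Suc i) l = key w (Suc j) l"
      using k(1) k' KS eqW by auto
    show ?thesis
    proof (cases "Wf w i = 1")
      case True
      have "key w (Suc i) k' < key w (Suc j) k'" using k(2) k' KS True eqW by simp
      then have "lexlt (key w (Suc i)) (key w (Suc j))" unfolding lexlt_def using pre by blast
      then show ?thesis using True unfolding ltw_def by (simp add: key_suc_mod)
    next
      case False
      have "key w (Suc j) k' < key w (Suc i) k'"
        using k(2) k' KS[of i k'] KS[of j k'] False eqW KL[of i "Suc k'"] KL[of j "Suc k'"] by simp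
      moreover have "\<forall>l<k'. key w (Suc j) l = key w (Suc i) l" using pre by simp
      ultimately have "lexlt (key w (Suc j)) (key w (Suc i))" unfolding lexlt_def by blast
      then show ?thesis using False unfolding ltw_def by (simp add: key_suc_mod)
    qed
  next
    case False
    then have tie: "key w i = key w j" "tb w i < tb w j" using lt unfolding ltw_def by auto
    have "key w (Suc i) = key w (Suc j)"
    proof
      fix l show "key w (Suc i) l = key w (Suc j) l" using KS[of i l] KS[of j l] tie(1) eqW by simp
    qed
    then have ks: "key w (Suc i mod N) = key w (Suc j mod N)" by (simp add: key_suc_mod)
    show ?thesis using HT[OF ij tie] ks unfolding ltw_def by (auto split: if_splits)
  qed
qed

lemma mono_seg:
  assumes y: "y \<in> {1..N}" "y' \<in> {1..N}" "y < y'" and l: "lab (Z 0) (Z 1) y = lab (Z 0) (Z 1) y'"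
  shows "if lab (Z 0) (Z 1) y = 1 then pic y < pic y' else pic y' < pic y"
proof -
  obtain i where i: "i < N" "y = rk i" using rk_surj[OF y(1)] by metis
  obtain j where j: "j < N" "y' = rk j" using rk_surj[OF y(2)] by metis
  have lt: "ltw w i j" using rk_iff[OF i(1) j(1)] i j y(3) by simp
  have eqW: "Wf w i = Wf w j" using l lab_rk i j by simp
  have si: "Suc i mod N < N" "Suc j mod N < N" using N_pos by auto
  have "if Wf w i = 1 then ltw w (Suc i mod N) (Suc j mod N) else ltw w (Suc j mod N) (Suc i mod N)"
    using STEP[OF i(1) j(1) lt eqW] .
  then show ?thesis using rk_iff[OF si(1) si(2)] rk_iff[OF si(2) si(1)] pic_rk i j lab_rk
    by (auto split: if_splits)
qed

lemma Z_mono: "c \<le> d \<Longrightarrow> Z c \<le> Z d" unfolding Z_def by (intro card_mono) auto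

lemma Z_le: "Z c \<le> N"
proof -
  have "Z c \<le> card {0..<N}" unfolding Z_def by (intro card_mono) auto
  then show ?thesis by simp
qed

lemma valid_cons: "valid N pic (Z 0) (Z 1)"
  unfolding valid_def
proof (intro conjI allI impI)
  show "Z 0 \<le> Z 1" by (rule Z_mono) simp
  show "Z 1 \<le> N" by (rule Z_le)
  fix j j'
  show "0 < j \<and> j < j' \<and> j' \<le> Z 0 \<Longrightarrow> pic j' < pic j"
  proof -
    assume a: "0 < j \<and> j < j' \<and> j' \<le> Z 0"
    have "Z 0 \<le> N" by (rule Z_le)
    then have "j \<in> {1..N}" "j' \<in> {1..N}" using a by auto
    moreover have "lab (Z 0) (Z 1) j = 0" "lab (Z 0) (Z 1) j' = 0" using a by (auto simp: lab_def)
    ultimately show ?thesis using mono_seg[of j j'] a by auto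
  qed
  show "Z 0 < j \<and> j < j' \<and> j' \<le> Z 1 \<Longrightarrow> pic j < pic j'"
  proof -
    assume a: "Z 0 < j \<and> j < j' \<and> j' \<le> Z 1"
    have "Z 1 \<le> N" by (rule Z_le)
    then have "j \<in> {1..N}" "j' \<in> {1..N}" using a by auto
    moreover have "lab (Z 0) (Z 1) j = 1" "lab (Z 0) (Z 1) j' = 1" using a by (auto simp: lab_def)
    ultimately show ?thesis using mono_seg[of j j'] a by auto
  qed
  show "Z 1 < j \<and> j < j' \<and> j' \<le> N \<Longrightarrow> pic j' < pic j"
  proof -
    assume a: "Z 1 < j \<and> j < j' \<and> j' \<le> N"
    have "Z 0 \<le> Z 1" by (rule Z_mono) simp
    then have "j \<in> {1..N}" "j' \<in> {1..N}" using a by auto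
    moreover have "lab (Z 0) (Z 1) j = 2" "lab (Z 0) (Z 1) j' = 2" using a \<open>Z 0 \<le> Z 1\<close> by (auto simp: lab_def)
    ultimately show ?thesis using mono_seg[of j j'] a by auto
  qed
qed

lemma exists_trip: "\<exists>\<pi> e1 e2 x. trip N \<pi> e1 e2 x \<and> itin N \<pi> e1 e2 x = w"
proof (intro exI conjI)
  show "trip N pic (Z 0) (Z 1) (rk 0)"
    using pic_cyc valid_cons rk_range[OF N_pos] by unfold_locales auto
  show "itin N pic (Z 0) (Z 1) (rk 0) = w"
  proof (rule nth_equalityI)
    show "length (itin N pic (Z 0) (Z 1) (rk 0)) = length w" by (simp add: itin_def)
    fix k assume "k < length (itin N pic (Z 0) (Z 1) (rk 0))"
    then have k: "k < N" by (simp add: itin_def)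
    have "itin N pic (Z 0) (Z 1) (rk 0) ! k = lab (Z 0) (Z 1) ((pic ^^ k) (rk 0))"
      using k by (simp add: itin_def)
    also have "(pic ^^ k) (rk 0) = rk k" using pic_pow[OF N_pos, of k] k by simp
    also have "lab (Z 0) (Z 1) (rk k) = Wf w k" using lab_rk[OF k] .
    also have "\<dots> = w ! k" using k by (simp add: Wf_def)
    finally show "itin N pic (Z 0) (Z 1) (rk 0) ! k = w ! k" .
  qed
qed

end


lemma cons_prim:
  assumes ne: "w \<noteq> []" and st: "set w \<subseteq> {0..<3}" and prim: "primitive_word w"
  shows "cons w"
proof -
  have eqij: "i = j" if "i < length w" "j < length w" "key w i = key w j" for i j
  proof -
    have "rotate (i mod length w) w = rotate (j mod length w) w" using key_eq_rot[OF st ne that(3)] .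
    then show ?thesis using rotate_inj_prim[OF prim] that by simp
  qed
  show ?thesis
  proof
    show "w \<noteq> []" "set w \<subseteq> {0..<3}" using ne st by auto
    show "\<And>i j. i < length w \<Longrightarrow> j < length w \<Longrightarrow> i \<noteq> j \<Longrightarrow> key w i = key w j \<Longrightarrow> tb w i \<noteq> tb w j"
      using eqij by blast
    show "\<And>i j. i < length w \<Longrightarrow> j < length w \<Longrightarrow> key w i = key w j \<Longrightarrow> tb w i < tb w j \<Longrightarrow>
      (if Wf w i = 1 then tb w (Suc i mod length w) < tb w (Suc j mod length w)
       else tb w (Suc j mod length w) < tb w (Suc i mod length w))"
      using eqij by fastforce
  qed
qed

locale qq =
  fixes q :: "nat list" and m :: nat
  assumes lq: "length q = m" and m0: "0 < m" and primq: "primitive_word q"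
    and stq: "set q \<subseteq> {0..<3}" and oddq: "odd (cnt (Wf (q @ q)) 0 m)"
begin

abbreviation w where "w \<equiv> q @ q"

lemma lw: "length w = 2 * m" using lq by simp

lemma Wq: "Wf w l = q ! (l mod m)"
proof -
  have "Wf w l = (q @ q) ! (l mod (2 * m))" unfolding Wf_def using lw by simp
  also have "\<dots> = q ! ((l mod (2 * m)) mod m)" using nth_double[of "l mod (2 * m)" q] lq m0 by simp
  also have "(l mod (2 * m)) mod m = l mod m" by (simp add: mod_mod_cancel)
  finally show ?thesis .
qed

lemma stw: "set w \<subseteq> {0..<3}" using stq by simp
lemma new: "w \<noteq> []" using lq m0 by auto

lemma key_eq_mod: assumes "key w i = key w j" shows "i mod m = j mod m"
proof -
  have W: "Wf w (i + k) = Wf w (j + k)" for k using key_eq_W[OF stw new assms] .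
  have "rotate (i mod m) q = rotate (j mod m) q"
  proof (rule nth_equalityI)
    show "length (rotate (i mod m) q) = length (rotate (j mod m) q)" by simp
    fix l assume "l < length (rotate (i mod m) q)"
    then have l: "l < length q" by simp
    have "rotate (i mod m) q ! l = q ! ((i + l) mod m)"
      using nth_rotate[OF l, of "i mod m"] lq by (simp add: mod_add_left_eq)
    also have "\<dots> = Wf w (i + l)" using Wq by simp
    also have "\<dots> = Wf w (j + l)" using W .
    also have "\<dots> = q ! ((j + l) mod m)" using Wq by simp
    also have "\<dots> = rotate (j mod m) q ! l"
      using nth_rotate[OF l, of "j mod m"] lq by (simp add: mod_add_left_eq)
    finally show "rotate (i mod m) q ! l = rotate (j mod m) q ! l" .
  qed
  then show ?thesis using rotate_inj_prim[OF primq] lq m0 by simp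
qed

abbreviation E where "E a \<equiv> even (cnt (Wf w) 0 a)"

lemma tb_low: "a < m \<Longrightarrow> tb w a = (if E a then 0 else 1)"
  unfolding tb_def using lw by simp

lemma tb_high: "a < m \<Longrightarrow> tb w (a + m) = (if E a then 1 else 0)"
  unfolding tb_def using lw by simp

lemma E_Suc: "E (Suc a) = (E a = (Wf w a = 1))"
  by (simp add: cnt_Suc)

lemma split2: "i < 2 * m \<Longrightarrow> i = i mod m \<or> i = i mod m + m"
  using m0 by (cases "i < m") (auto simp: le_mod_geq)

lemma Wf_mod_m: "Wf w i = Wf w (i mod m)" using Wq by simp

lemma cons_qq: "cons w"
proof
  show "w \<noteq> []" using new .
  show "set w \<subseteq> {0..<3}" using stw .
  fix i j assume ij: "i < length w" "j < length w"
  define a where "a = i mod m"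
  have am: "a < m" using a_def m0 by simp
  have pair: "key w i = key w j \<Longrightarrow> i \<noteq> j \<Longrightarrow> (i = a \<and> j = a + m) \<or> (i = a + m \<and> j = a)"
  proof -
    assume k: "key w i = key w j" and ne: "i \<noteq> j"
    have "j mod m = a" using key_eq_mod[OF k] a_def by simp
    then show ?thesis using split2[of i] split2[of j] ij lw a_def ne by auto
  qed
  show "i \<noteq> j \<Longrightarrow> key w i = key w j \<Longrightarrow> tb w i \<noteq> tb w j"
    using pair tb_low[OF am] tb_high[OF am] by (auto split: if_splits)
  assume k: "key w i = key w j" and tbl: "tb w i < tb w j"
  have ne: "i \<noteq> j" using tbl by auto
  have c: "Wf w i = Wf w a" using Wf_mod_m a_def by simp
  have ij': "(E a \<and> i = a \<and> j = a + m) \<or> (\<not> E a \<and> i = a + m \<and> j = a)"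
    using pair[OF k ne] tbl tb_low[OF am] tb_high[OF am] by (auto split: if_splits)
  show "if Wf w i = 1 then tb w (Suc i mod length w) < tb w (Suc j mod length w)
       else tb w (Suc j mod length w) < tb w (Suc i mod length w)"
  proof (cases "Suc a < m")
    case True
    have s1: "Suc a mod length w = Suc a" "Suc (a + m) mod length w = Suc a + m" using True lw by auto
    have t1: "tb w (Suc a) = (if E (Suc a) then 0 else 1)" "tb w (Suc a + m) = (if E (Suc a) then 1 else 0)"
      using tb_low[OF True] tb_high[OF True] by auto
    show ?thesis using ij' s1 t1 E_Suc[of a] c by (auto split: if_splits)
  next
    case False
    then have am1: "Suc a = m" using am by simp
    have e2: "Suc (a + m) = length w" using am1 lw by simp
    have s1: "Suc a mod length w = 0 + m" "Suc (a + m) mod length w = 0"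
      using am1 lw m0 by (simp, simp only: e2 mod_self)
    have t1: "tb w (0 + m) = 1" "tb w 0 = 0" using tb_low[OF m0] tb_high[OF m0] by auto
    have "E (Suc a) = False" using oddq am1 by simp
    then have "E a = (Wf w a \<noteq> 1)" using E_Suc[of a] by auto
    then show ?thesis using ij' s1 t1 c by (auto split: if_splits)
  qed
qed

end


lemma rotate_inj_list: "rotate j u = rotate j v \<Longrightarrow> u = v"
proof -
  assume "rotate j u = rotate j v"
  then have "(rotate1 ^^ j) u = (rotate1 ^^ j) v" by (simp add: rotate_def)
  then show "u = v" by (rule injD[OF inj_fn[OF inj_rotate1]])
qed

lemma prim_rotate:
  assumes "primitive_word s" "s \<noteq> []"
  shows "primitive_word (rotate j s)"
proof -
  have ne: "rotate j s \<noteq> []" using assms(2) by simp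
  show ?thesis unfolding primitive_iff_rot[OF ne]
  proof (intro allI impI)
    fix k assume k: "0 < k \<and> k < length (rotate j s)"
    show "rotate k (rotate j s) \<noteq> rotate j s"
    proof
      assume "rotate k (rotate j s) = rotate j s"
      then have "rotate j (rotate k s) = rotate j s" by (simp add: rotate_rotate add.commute)
      then have "rotate k s = s" by (rule rotate_inj_list)
      then show False using assms primitive_iff_rot[OF assms(2)] k by auto
    qed
  qed
qed

lemma filter_len_rotate: "length (filter P (rotate j s)) = length (filter P s)"
proof -
  have "rotate j s = drop (j mod length s) s @ take (j mod length s) s" by (rule rotate_drop_take)
  then have "length (filter P (rotate j s)) = length (filter P (drop (j mod length s) s)) + length (filter P (take (j mod length s) s))"
    by simp
  moreover have "length (filter P s) = length (filter P (take (j mod length s) s)) + length (filter P (drop (j mod length s) s))"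
    by (metis append_take_drop_id filter_append length_append)
  ultimately show ?thesis by linarith
qed

lemma o_sig_rotate: "o_sig \<sigma> (rotate j s) = o_sig \<sigma> s"
  unfolding o_sig_def by (rule filter_len_rotate)

lemma finite_words: "finite (words k m)"
proof -
  have "words k m = {xs. set xs \<subseteq> {0..<k} \<and> length xs = m}" unfolding words_def by auto
  then show ?thesis using finite_lists_length_eq[of "{0..<k}" m] by simp
qed

lemma words_rotate: "s \<in> words k m \<Longrightarrow> rotate j s \<in> words k m"
  unfolding words_def by simp

lemma card_prim_words:
  assumes "m > 0"
  shows "card {s \<in> words k m. primitive_word s} = m * L k m"
  unfolding L_def
proof (rule card_necklaces)
  show "finite {s \<in> words k m. primitive_word s}" using finite_words by simp
  show "\<And>s. s \<in> {s \<in> words k m. primitive_word s} \<Longrightarrow> length s = m" unfolding words_def by simp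
  show "0 < m" using assms .
  show "\<And>s j. s \<in> {s \<in> words k m. primitive_word s} \<Longrightarrow> rotate j s \<in> {s \<in> words k m. primitive_word s}"
  proof -
    fix s j assume s: "s \<in> {s \<in> words k m. primitive_word s}"
    then have "s \<noteq> []" using assms unfolding words_def by auto
    then show "rotate j s \<in> {s \<in> words k m. primitive_word s}" using s words_rotate prim_rotate by auto
  qed
  show "\<And>s. s \<in> {s \<in> words k m. primitive_word s} \<Longrightarrow> primitive_word s" by simp
qed

lemma card_prim_odd_words:
  assumes "m > 0"
  shows "card {s \<in> words k m. primitive_word s \<and> odd (o_sig \<sigma> s)} =
         m * card (necklace ` {s \<in> words k m. primitive_word s \<and> odd (o_sig \<sigma> s)})"
proof (rule card_necklaces)
  show "finite {s \<in> words k m. primitive_word s \<and> odd (o_sig \<sigma> s)}" using finite_words by simp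
  show "\<And>s. s \<in> {s \<in> words k m. primitive_word s \<and> odd (o_sig \<sigma> s)} \<Longrightarrow> length s = m"
    unfolding words_def by simp
  show "0 < m" using assms .
  show "\<And>s j. s \<in> {s \<in> words k m. primitive_word s \<and> odd (o_sig \<sigma> s)} \<Longrightarrow>
     rotate j s \<in> {s \<in> words k m. primitive_word s \<and> odd (o_sig \<sigma> s)}"
  proof -
    fix s j assume s: "s \<in> {s \<in> words k m. primitive_word s \<and> odd (o_sig \<sigma> s)}"
    then have "s \<noteq> []" using assms unfolding words_def by auto
    then show "rotate j s \<in> {s \<in> words k m. primitive_word s \<and> odd (o_sig \<sigma> s)}"
      using s words_rotate prim_rotate o_sig_rotate by auto
  qed
  show "\<And>s. s \<in> {s \<in> words k m. primitive_word s \<and> odd (o_sig \<sigma> s)} \<Longrightarrow> primitive_word s" by simp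
qed

lemma L_sig_even:
  assumes "n = 2 * m"
  shows "L_sig k (real n / 2) \<sigma> = card (necklace ` {s \<in> words k m. primitive_word s \<and> odd (o_sig \<sigma> s)})"
proof -
  have "real n / 2 = real m" using assms by simp
  then show ?thesis unfolding L_sig_def by simp
qed

lemma L_sig_odd:
  assumes "odd n"
  shows "L_sig k (real n / 2) \<sigma> = 0"
proof -
  have "real n / 2 \<notin> \<nat>"
  proof
    assume "real n / 2 \<in> \<nat>"
    then obtain j where "real n / 2 = real j" by (auto elim: Nats_cases)
    then have "n = 2 * j" by linarith
    then show False using assms by simp
  qed
  then show ?thesis unfolding L_sig_def by simp
qed

lemma o_sig_MPM:
  assumes "set s \<subseteq> {0..<3}"
  shows "o_sig [Minus, Plus, Minus] s = length (filter (\<lambda>c. c \<noteq> 1) s)"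
proof -
  have "\<forall>c\<in>set s. (c < length [Minus, Plus, Minus] \<and> [Minus, Plus, Minus] ! c = Minus) = (c \<noteq> 1)"
  proof
    fix c assume "c \<in> set s"
    then have "c = 0 \<or> c = 1 \<or> c = 2" using assms by auto
    then show "(c < length [Minus, Plus, Minus] \<and> [Minus, Plus, Minus] ! c = Minus) = (c \<noteq> 1)" by auto
  qed
  then have "filter (\<lambda>c. c < length [Minus, Plus, Minus] \<and> [Minus, Plus, Minus] ! c = Minus) s = filter (\<lambda>c. c \<noteq> 1) s"
    by (intro filter_cong) auto
  then show ?thesis unfolding o_sig_def by simp
qed

lemma cnt_list:
  assumes "\<And>l. l < length s \<Longrightarrow> W l = s ! l"
  shows "cnt W 0 (length s) = length (filter (\<lambda>c. c \<noteq> 1) s)"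
proof -
  have "map (\<lambda>l. W (0 + l)) [0..<length s] = s"
    by (rule nth_equalityI) (simp_all add: assms)
  then show ?thesis unfolding cnt_def by simp
qed


definition Tset :: "nat \<Rightarrow> ((nat \<Rightarrow> nat) \<times> nat \<times> nat \<times> nat) set" where
  "Tset n = {(\<pi>, e1, e2, x). trip n \<pi> e1 e2 x}"

definition Phi :: "nat \<Rightarrow> ((nat \<Rightarrow> nat) \<times> nat \<times> nat \<times> nat) \<Rightarrow> nat list" where
  "Phi n t = (case t of (\<pi>, e1, e2, x) \<Rightarrow> itin n \<pi> e1 e2 x)"

lemma trip_iff: "trip n \<pi> e1 e2 x \<longleftrightarrow> cyclic_perm n \<pi> \<and> valid n \<pi> e1 e2 \<and> x \<in> {1..n}"
  unfolding trip_def by blast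

lemma card_T:
  assumes n3: "n \<ge> 3"
  shows "card (Tset n) = n * (4 * c4 n)"
proof -
  define C where "C = cyc_class [Minus, Plus, Minus] n"
  define V where "V = {(\<pi>, e1, e2). cyclic_perm n \<pi> \<and> valid n \<pi> e1 e2}"
  have VS: "V = Sigma C (\<lambda>\<pi>. {(e1, e2). valid n \<pi> e1 e2})"
    unfolding V_def C_def cyc_class_def using sigma_valid unfolding cyclic_perm_def by auto
  have finC: "finite C"
  proof (rule finite_subset)
    show "C \<subseteq> {p. p permutes {1..n}}" unfolding C_def cyc_class_def cyclic_perm_def by auto
    show "finite {p. p permutes {1..n}}" by (rule finite_permutations) simp
  qed
  have finB: "finite {(e1, e2). valid n \<pi> e1 e2}" for \<pi>
    by (rule finite_subset[of _ "{0..n} \<times> {0..n}"]) (auto simp: valid_def)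
  have c4: "\<pi> \<in> C \<Longrightarrow> card {(e1, e2). valid n \<pi> e1 e2} = 4" for \<pi>
  proof -
    assume "\<pi> \<in> C"
    then have cy: "cyclic_perm n \<pi>" and "in_sigma_class [Minus, Plus, Minus] n \<pi>"
      unfolding C_def cyc_class_def by auto
    then obtain a1 a2 where "valid n \<pi> a1 a2" and pm: "\<pi> permutes {1..n}" using sigma_valid by blast
    then show ?thesis using labelings_card[OF pm cy n3] by blast
  qed
  have cardV: "card V = 4 * card C"
    using VS card_SigmaI[OF finC, of "\<lambda>\<pi>. {(e1, e2). valid n \<pi> e1 e2}"] finB c4 by simp
  define f :: "((nat \<Rightarrow> nat) \<times> nat \<times> nat) \<times> nat \<Rightarrow> (nat \<Rightarrow> nat) \<times> nat \<times> nat \<times> nat"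
    where "f = (\<lambda>((\<pi>, e1, e2), x). (\<pi>, e1, e2, x))"
  have TV: "Tset n = f ` (V \<times> {1..n})"
    unfolding Tset_def V_def f_def trip_iff by (auto simp: image_iff)
  have "inj_on f (V \<times> {1..n})" unfolding f_def inj_on_def by auto
  then have "card (Tset n) = card V * n" using TV by (simp add: card_image card_cartesian_product)
  then show ?thesis using cardV C_def c4_def by simp
qed

lemma fiber_A:
  assumes n3: "n \<ge> 3" and w: "w \<in> words 3 n" "primitive_word w"
  shows "card {t \<in> Tset n. Phi n t = w} = 1"
proof -
  have lw: "length w = n" and sw: "set w \<subseteq> {0..<3}" using w unfolding words_def by auto
  have ne: "w \<noteq> []" using lw n3 by auto
  obtain \<pi> e1 e2 x where t0: "trip n \<pi> e1 e2 x" "itin n \<pi> e1 e2 x = w"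
    using cons.exists_trip[OF cons_prim[OF ne sw w(2)]] lw by blast
  have "{t \<in> Tset n. Phi n t = w} = {(\<pi>, e1, e2, x)}"
  proof
    show "{(\<pi>, e1, e2, x)} \<subseteq> {t \<in> Tset n. Phi n t = w}" using t0 unfolding Tset_def Phi_def by simp
    show "{t \<in> Tset n. Phi n t = w} \<subseteq> {(\<pi>, e1, e2, x)}"
    proof
      fix t assume tin: "t \<in> {t \<in> Tset n. Phi n t = w}"
      obtain \<pi>' e1' e2' x' where tt: "t = (\<pi>', e1', e2', x')" by (cases t) auto
      have t': "trip n \<pi>' e1' e2' x'" "itin n \<pi>' e1' e2' x' = w"
        using tin unfolding tt Tset_def Phi_def by auto
      have "(\<pi>, e1, e2, x) = (\<pi>', e1', e2', x')"
        using fiber_prim[OF t0(1) t'(1)] t0 t' w(2) by auto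
      then show "t \<in> {(\<pi>, e1, e2, x)}" using tt by simp
    qed
  qed
  then show ?thesis by simp
qed

lemma cnt_q_odd:
  assumes q: "q \<in> words 3 m" "odd (o_sig [Minus, Plus, Minus] q)"
  shows "odd (cnt (Wf (q @ q)) 0 m)"
proof -
  have lq: "length q = m" and sq: "set q \<subseteq> {0..<3}" using q unfolding words_def by auto
  have "cnt (Wf (q @ q)) 0 (length q) = length (filter (\<lambda>c. c \<noteq> 1) q)"
    by (rule cnt_list) (simp add: Wf_def nth_append)
  then show ?thesis using o_sig_MPM[OF sq] q(2) lq by simp
qed

lemma fiber_B:
  assumes n3: "n \<ge> 3" and n2: "n = 2 * m" and q: "q \<in> words 3 m" "primitive_word q"
    "odd (o_sig [Minus, Plus, Minus] q)"
  shows "card {t \<in> Tset n. Phi n t = q @ q} = 2"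
proof -
  have lq: "length q = m" and sq: "set q \<subseteq> {0..<3}" using q unfolding words_def by auto
  have m0: "0 < m" using n2 n3 by simp
  interpret Q: qq q m using lq m0 q(2) sq cnt_q_odd[OF q(1) q(3)] by unfold_locales auto
  have lqq: "length (q @ q) = n" using lq n2 by simp
  obtain \<pi> e1 e2 x where t0: "trip n \<pi> e1 e2 x" "itin n \<pi> e1 e2 x = q @ q"
    using cons.exists_trip[OF Q.cons_qq] unfolding lqq by blast
  define x1 where "x1 = (\<pi> ^^ m) x"
  have t1: "trip n \<pi> e1 e2 x1"
    using t0(1) trip.pin[OF t0(1), of m] unfolding trip_iff x1_def by auto
  have Wq: "lab e1 e2 ((\<pi> ^^ l) x) = q ! (l mod m)" for l using trip.W_qq[OF t0(1) n2 t0(2) lq] .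
  have w1: "itin n \<pi> e1 e2 x1 = q @ q"
  proof (rule nth_equalityI)
    show "length (itin n \<pi> e1 e2 x1) = length (q @ q)" using lq n2 by (simp add: itin_def)
    fix k assume "k < length (itin n \<pi> e1 e2 x1)"
    then have k: "k < n" by (simp add: itin_def)
    have "itin n \<pi> e1 e2 x1 ! k = lab e1 e2 ((\<pi> ^^ (k + m)) x)"
      using k unfolding itin_def x1_def by (simp add: funpow_add)
    also have "\<dots> = q ! (k mod m)" using Wq[of "k + m"] by simp
    also have "\<dots> = (q @ q) ! k" using nth_double[of k q] k n2 lq by simp
    finally show "itin n \<pi> e1 e2 x1 ! k = (q @ q) ! k" .
  qed
  have xx: "x \<noteq> x1"
  proof
    assume "x = x1"
    then have "(\<pi> ^^ 0) x = (\<pi> ^^ m) x" unfolding x1_def by simp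
    then have "0 mod n = m mod n" using trip.p_inj[OF t0(1)] by blast
    then show False using n2 m0 by simp
  qed
  have hback: "(\<pi> ^^ m) x1 = x"
  proof -
    have "(\<pi> ^^ m) x1 = (\<pi> ^^ n) x" unfolding x1_def using n2 by (simp add: funpow_add mult_2)
    then show ?thesis using trip.pn[OF t0(1)] by simp
  qed
  have "{t \<in> Tset n. Phi n t = q @ q} = {(\<pi>, e1, e2, x), (\<pi>, e1, e2, x1)}"
  proof
    show "{(\<pi>, e1, e2, x), (\<pi>, e1, e2, x1)} \<subseteq> {t \<in> Tset n. Phi n t = q @ q}"
      using t0 t1 w1 unfolding Tset_def Phi_def by simp
    show "{t \<in> Tset n. Phi n t = q @ q} \<subseteq> {(\<pi>, e1, e2, x), (\<pi>, e1, e2, x1)}"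
    proof
      fix t assume tin: "t \<in> {t \<in> Tset n. Phi n t = q @ q}"
      obtain \<pi>' e1' e2' x' where tt: "t = (\<pi>', e1', e2', x')" by (cases t) auto
      have t': "trip n \<pi>' e1' e2' x'" "itin n \<pi>' e1' e2' x' = q @ q"
        using tin unfolding tt Tset_def Phi_def by auto
      show "t \<in> {(\<pi>, e1, e2, x), (\<pi>, e1, e2, x1)}"
      proof (cases "(\<pi> ^^ 0) x < (\<pi> ^^ m) x \<longleftrightarrow> (\<pi>' ^^ 0) x' < (\<pi>' ^^ m) x'")
        case True
        then have "(\<pi>, e1, e2, x) = (\<pi>', e1', e2', x')"
          using fiber_qq[OF t0(1) t'(1) _ n2 t0(2) lq q(2)] t0(2) t'(2) by auto
        then show ?thesis using tt by simp
      next
        case False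
        have "(\<pi> ^^ 0) x1 < (\<pi> ^^ m) x1 \<longleftrightarrow> (\<pi>' ^^ 0) x' < (\<pi>' ^^ m) x'"
          using False hback xx unfolding x1_def by auto
        then have "(\<pi>, e1, e2, x1) = (\<pi>', e1', e2', x')"
          using fiber_qq[OF t1 t'(1) _ n2 w1 lq q(2)] w1 t'(2) by auto
        then show ?thesis using tt by simp
      qed
    qed
  qed
  then show ?thesis using xx by simp
qed


abbreviation MPM where "MPM \<equiv> [Minus, Plus, Minus]"

definition Aset :: "nat \<Rightarrow> nat list set" where
  "Aset n = {s \<in> words 3 n. primitive_word s}"

definition PO :: "nat \<Rightarrow> nat list set" where
  "PO m = {s \<in> words 3 m. primitive_word s \<and> odd (o_sig MPM s)}"

definition Bset :: "nat \<Rightarrow> nat list set" where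
  "Bset n = (if even n then (\<lambda>q. q @ q) ` PO (n div 2) else {})"

lemma not_prim_double: "\<not> primitive_word (q @ q)"
  unfolding primitive_word_def
  by (intro notI) (metis One_nat_def Suc_1 concat.simps(1) concat.simps(2) append_Nil2 lessI
      replicate_0 replicate_Suc)

lemma image_sub:
  assumes n3: "n \<ge> 3" and t: "t \<in> Tset n"
  shows "Phi n t \<in> Aset n \<union> Bset n"
proof -
  obtain \<pi> e1 e2 x where tt: "t = (\<pi>, e1, e2, x)" by (cases t) auto
  have tr: "trip n \<pi> e1 e2 x" using t tt unfolding Tset_def by auto
  define w where "w = itin n \<pi> e1 e2 x"
  have ww: "w \<in> words 3 n" using trip.len_itin[OF tr] trip.set_itin[OF tr] unfolding words_def w_def by auto
  have ph: "Phi n t = w" unfolding tt Phi_def w_def by simp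
  show ?thesis
  proof (cases "primitive_word w")
    case True then show ?thesis using ww ph unfolding Aset_def by simp
  next
    case False
    then obtain m where m: "n = 2 * m" "w = take m w @ take m w" "primitive_word (take m w)"
      "odd (cnt (\<lambda>k. lab e1 e2 ((\<pi> ^^ k) x)) 0 m)"
      using trip.itin_shape[OF tr] unfolding w_def by blast
    have lw: "length w = n" using ww unfolding words_def by simp
    have qw: "take m w \<in> words 3 m" using ww m(1) unfolding words_def
      by (auto dest: in_set_takeD)
    have sq: "set (take m w) \<subseteq> {0..<3}" using qw unfolding words_def by simp
    have lq: "length (take m w) = m" using lw m(1) by simp
    have "cnt (\<lambda>k. lab e1 e2 ((\<pi> ^^ k) x)) 0 (length (take m w)) = length (filter (\<lambda>c. c \<noteq> 1) (take m w))"
    proof (rule cnt_list)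
      fix l assume l: "l < length (take m w)"
      then have "l < n" using lq m(1) by simp
      then show "lab e1 e2 ((\<pi> ^^ l) x) = take m w ! l"
        using trip.Wmod[OF tr, of l] l lq unfolding w_def by simp
    qed
    then have "odd (o_sig MPM (take m w))" using m(4) lq o_sig_MPM[OF sq] by simp
    then have "take m w \<in> PO m" using qw m(3) unfolding PO_def by simp
    then have "w \<in> Bset n" unfolding Bset_def using m(1,2) by (auto intro: image_eqI)
    then show ?thesis using ph by simp
  qed
qed

lemma main_count:
  assumes n3: "n \<ge> 3"
  shows "4 * c4 n = L 3 n + L_sig 3 (real n / 2) MPM"
proof -
  define F where "F w = {t \<in> Tset n. Phi n t = w}" for w
  have finA: "finite (Aset n)" unfolding Aset_def using finite_words by simp
  have finB: "finite (Bset n)" unfolding Bset_def PO_def using finite_words by simp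
  have dis: "Aset n \<inter> Bset n = {}" unfolding Aset_def Bset_def using not_prim_double by auto
  have FA: "w \<in> Aset n \<Longrightarrow> card (F w) = 1" for w unfolding F_def Aset_def using fiber_A[OF n3] by simp
  have FB: "w \<in> Bset n \<Longrightarrow> card (F w) = 2" for w
  proof -
    assume "w \<in> Bset n"
    then obtain q where ev: "even n" and q: "q \<in> PO (n div 2)" "w = q @ q"
      unfolding Bset_def by (auto split: if_splits)
    have n2: "n = 2 * (n div 2)" using ev by simp
    show ?thesis using fiber_B[OF n3 n2] q unfolding F_def PO_def by simp
  qed
  have finF: "w \<in> Aset n \<union> Bset n \<Longrightarrow> finite (F w)" for w
    using FA FB by (metis card_eq_0_iff zero_neq_numeral zero_neq_one Un_iff)
  have TU: "Tset n = (\<Union>w\<in>Aset n \<union> Bset n. F w)"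
  proof
    show "Tset n \<subseteq> (\<Union>w\<in>Aset n \<union> Bset n. F w)"
    proof
      fix t assume t: "t \<in> Tset n"
      then have "t \<in> F (Phi n t)" unfolding F_def by simp
      moreover have "Phi n t \<in> Aset n \<union> Bset n" using image_sub[OF n3 t] .
      ultimately show "t \<in> (\<Union>w\<in>Aset n \<union> Bset n. F w)" by blast
    qed
    show "(\<Union>w\<in>Aset n \<union> Bset n. F w) \<subseteq> Tset n" unfolding F_def by blast
  qed
  have "card (Tset n) = (\<Sum>w\<in>Aset n \<union> Bset n. card (F w))"
    unfolding TU by (rule card_UN_disjoint) (use finA finB finF in \<open>auto simp: F_def\<close>)
  also have "\<dots> = (\<Sum>w\<in>Aset n. card (F w)) + (\<Sum>w\<in>Bset n. card (F w))"
    by (rule sum.union_disjoint) (use finA finB dis in auto)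
  also have "\<dots> = card (Aset n) + 2 * card (Bset n)" using FA FB by simp
  finally have cT: "card (Tset n) = card (Aset n) + 2 * card (Bset n)" .
  have cA: "card (Aset n) = n * L 3 n" unfolding Aset_def using card_prim_words n3 by simp
  have key: "n * (4 * c4 n) = n * (L 3 n + L_sig 3 (real n / 2) MPM)"
  proof (cases "even n")
    case True
    define m where "m = n div 2"
    have n2: "n = 2 * m" using True m_def by simp
    have m0: "m > 0" using n2 n3 by simp
    have "inj_on (\<lambda>q. q @ q) (PO m)"
    proof (rule inj_onI)
      fix a b assume ab: "a \<in> PO m" "b \<in> PO m" "a @ a = b @ b"
      have "length a = length b" using ab unfolding PO_def words_def by simp
      then show "a = b" using ab(3) by simp
    qed
    then have "card (Bset n) = card (PO m)" unfolding Bset_def using True m_def by (simp add: card_image)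
    also have "\<dots> = m * L_sig 3 (real n / 2) MPM"
      using card_prim_odd_words[OF m0, of 3 MPM] L_sig_even[OF n2, of 3 MPM] unfolding PO_def by simp
    finally have "card (Bset n) = m * L_sig 3 (real n / 2) MPM" .
    then show ?thesis using card_T[OF n3] cT cA n2 by (simp add: algebra_simps)
  next
    case False
    then have "Bset n = {}" unfolding Bset_def by simp
    then have "card (Bset n) = 0" by simp
    then have "card (Tset n) = card (Aset n)" using cT by simp
    then have e: "n * (4 * c4 n) = n * L 3 n" using card_T[OF n3] cA by linarith
    have "n \<noteq> 0" using n3 by simp
    then have "4 * c4 n = L 3 n" using e by (metis mult_left_cancel)
    moreover have "L_sig 3 (real n / 2) MPM = 0" using L_sig_odd[OF False] .
    ultimately show ?thesis by simp
  qed
  then show ?thesis using n3 by simp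
qed

theorem theorem3p2:
  fixes n :: nat
  assumes "n \<ge> 3"
  shows "real (c4 n) = real (L_star 3 n [Minus, Plus, Minus]) / 4"
proof -
  have "4 * c4 n = L_star 3 n [Minus, Plus, Minus]"
    using main_count[OF assms] unfolding L_star_def by simp
  then have "real (4 * c4 n) = real (L_star 3 n [Minus, Plus, Minus])" by simp
  then show ?thesis by simp
qed


end
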